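(* Let $\mathbf{Q}(t)=(Q_1(t),\ldots,Q_K(t))$, $t\in\{0,1,2,\ldots\}$, be a stochastic vector process with real-valued components and $p(t)$ a real-valued stochastic process on the same probability space; let $\mathcal{H}(0)=\{\mathbf{Q}(0)\}$ and $\mathcal{H}(t)=\{\mathbf{Q}(0),\ldots,\mathbf{Q}(t),p(0),\ldots,p(t-1)\}$ for $t>0$. Let $L(\mathbf{Q})=\frac{1}{2}\sum_{k=1}^Kw_kQ_k^2$ with constants $w_k>0$, $\|\mathbf{Q}\|=\sqrt{L(\mathbf{Q})}$, $\Delta(\mathcal{H}(t))=\mathbb{E}[L(\mathbf{Q}(t+1))-L(\mathbf{Q}(t))\mid\mathcal{H}(t)]$, and $d_k(t)=Q_k(t+1)-Q_k(t)$. Suppose there is a finite constant $D$ with $\mathbb{E}[d_k(t)^4\mid\mathbf{Q}(t)]\leq D$ for all $t$, all possible $\mathbf{Q}(t)$ and all $k$; that $\mathbb{E}[\|\mathbf{Q}(0)\|^4]<\infty$; and that there are constants $\epsilon>0$ and $\tilde{B}>0$ such that for all $t$ and all possible $\mathcal{H}(t)$, $$\Delta(\mathcal{H}(t))\leq\tilde{B}-\epsilon\sum_{k=1}^K|Q_k(t)|.$$ Then: (a) There are constants $c>0$ and $a>0$ such that whenever $\|\mathbf{Q}(t)\|\geq a$, $\mathbb{E}[\|\mathbf{Q}(t+1)\|\mid\mathbf{Q}(t)]\leq\|\mathbf{Q}(t)\|-c$. (b) There is a finite constant $b>0$ such that for all $M\in\{1,2,\ldots\}$, $\frac{1}{M}\sum_{t=0}^{M-1}\mathbb{E}[\|\mathbf{Q}(t)\|^3]\leq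 b$. (c) For all $k\in\{1,\ldots,K\}$, $\sum_{t=1}^\infty\mathbb{E}[Q_k(t)^2]/t^2<\infty$. (d) For all $k\in\{1,\ldots,K\}$, $\lim_{t\to\infty}Q_k(t)/t=0$ with probability 1. (e) $\limsup_{t\to\infty}\frac{1}{t}\sum_{\tau=0}^{t-1}\sum_{k=1}^K|Q_k(\tau)|\leq\tilde{B}/\epsilon$ with probability 1.
   Context: Time is slotted. "For all possible $\mathcal{H}(t)$" (resp. $\mathbf{Q}(t)$) means for every realization (almost surely). *)

theory Defs
  imports "HOL-Probability.Probability"
begin

definition lyap :: "(nat \<Rightarrow> real) \<Rightarrow> nat \<Rightarrow> (nat \<Rightarrow> real) \<Rightarrow> real" where
  "lyap w K q = (1/2) * (\<Sum>k=1..K. w k * (q k)^2)"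

definition lnorm :: "(nat \<Rightarrow> real) \<Rightarrow> nat \<Rightarrow> (nat \<Rightarrow> real) \<Rightarrow> real" where
  "lnorm w K q = sqrt (lyap w K q)"

definition gen_sigma :: "'a set \<Rightarrow> ('a \<Rightarrow> real) set \<Rightarrow> 'a measure" where
  "gen_sigma \<Omega> fs = sigma \<Omega> {f -` A \<inter> \<Omega> | f A. f \<in> fs \<and> A \<in> sets borel}"

text \<open>H(t) = {Q(0),...,Q(t), p(0),...,p(t-1)} (for t = 0 just {Q(0)}).  Q t k \<omega> = Q_k(t)(\<omega>).\<close>

definition hist_alg :: "'a measure \<Rightarrow> nat \<Rightarrow> (nat \<Rightarrow> nat \<Rightarrow> 'a \<Rightarrow> real) \<Rightarrow> (nat \<Rightarrow> 'a \<Rightarrow> real)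
    \<Rightarrow> nat \<Rightarrow> 'a measure" where
  "hist_alg M K Q p t = gen_sigma (space M)
     ({Q s k | s k. s \<le> t \<and> k \<in> {1..K}} \<union> {p s | s. s < t})"

definition state_alg :: "'a measure \<Rightarrow> nat \<Rightarrow> (nat \<Rightarrow> nat \<Rightarrow> 'a \<Rightarrow> real) \<Rightarrow> nat \<Rightarrow> 'a measure" where
  "state_alg M K Q t = gen_sigma (space M) {Q t k | k. k \<in> {1..K}}"

end

theory Submission
  imports Defs
begin

lemma gen_sigma_space: "space (gen_sigma \<Omega> fs) = \<Omega>"
  unfolding gen_sigma_def by (rule space_measure_of) auto

lemma gen_sigma_sets: "sets (gen_sigma \<Omega> fs) = sigma_sets \<Omega> {f -` A \<inter> \<Omega> | f A. f \<in> fs \<and> A \<in> sets borel}"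
  unfolding gen_sigma_def by (rule sets_measure_of) auto

lemma gen_sigma_meas: "f \<in> fs \<Longrightarrow> f \<in> borel_measurable (gen_sigma \<Omega> fs)"
  unfolding measurable_def gen_sigma_space gen_sigma_sets
  by (auto intro!: sigma_sets.Basic)

lemma gen_sigma_subalg:
  assumes "\<And>f. f \<in> fs \<Longrightarrow> f \<in> borel_measurable M"
  shows "subalgebra M (gen_sigma (space M) fs)"
  unfolding subalgebra_def gen_sigma_space gen_sigma_sets
proof (rule conjI[OF refl], rule sets.sigma_sets_subset)
  show "{f -` A \<inter> space M |f A. f \<in> fs \<and> A \<in> sets borel} \<subseteq> sets M"
    using assms by (auto simp: measurable_sets)
qed

lemma gen_sigma_mono:
  assumes "fs \<subseteq> gs"
  shows "subalgebra (gen_sigma \<Omega> gs) (gen_sigma \<Omega> fs)"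
  unfolding subalgebra_def gen_sigma_space gen_sigma_sets
proof (rule conjI[OF refl])
  show "sigma_sets \<Omega> {f -` A \<inter> \<Omega> |f A. f \<in> fs \<and> A \<in> sets borel}
    \<subseteq> sigma_sets \<Omega> {f -` A \<inter> \<Omega> |f A. f \<in> gs \<and> A \<in> sets borel}"
    by (rule sigma_sets_mono') (use assms in auto)
qed



locale T7 = prob_space M for M :: "'a measure" +
  fixes K :: nat
    and Q :: "nat \<Rightarrow> nat \<Rightarrow> 'a \<Rightarrow> real"
    and p :: "nat \<Rightarrow> 'a \<Rightarrow> real"
    and w :: "nat \<Rightarrow> real"
    and D \<epsilon> B :: real
  assumes Q_meas: "\<And>t k. k \<in> {1..K} \<Longrightarrow> Q t k \<in> borel_measurable M"
    and p_meas: "\<And>t. p t \<in> borel_measurable M"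
    and w_pos: "\<And>k. k \<in> {1..K} \<Longrightarrow> w k > 0"
    and fourth_moment: "\<And>t k. k \<in> {1..K} \<Longrightarrow>
          AE \<omega> in M. nn_cond_exp M (state_alg M K Q t)
              (\<lambda>\<omega>. ennreal ((Q (Suc t) k \<omega> - Q t k \<omega>) ^ 4)) \<omega> \<le> ennreal D"
    and init: "(\<integral>\<^sup>+ \<omega>. ennreal (lnorm w K (\<lambda>k. Q 0 k \<omega>) ^ 4) \<partial>M) < \<infinity>"
    and eps_pos: "\<epsilon> > 0" and B_pos: "B > 0"
    and drift: "\<And>t. AE \<omega> in M.
          real_cond_exp M (hist_alg M K Q p t)
              (\<lambda>\<omega>. lyap w K (\<lambda>k. Q (Suc t) k \<omega>) - lyap w K (\<lambda>k. Q t k \<omega>)) \<omega>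
            \<le> B - \<epsilon> * (\<Sum>k=1..K. \<bar>Q t k \<omega>\<bar>)"
begin

abbreviation "F t \<equiv> state_alg M K Q t"
abbreviation "H t \<equiv> hist_alg M K Q p t"
abbreviation "L t \<omega> \<equiv> lyap w K (\<lambda>k. Q t k \<omega>)"
abbreviation "N t \<omega> \<equiv> lnorm w K (\<lambda>k. Q t k \<omega>)"
abbreviation "S t \<omega> \<equiv> (\<Sum>k=1..K. \<bar>Q t k \<omega>\<bar>)"
abbreviation "dd t k \<omega> \<equiv> Q (Suc t) k \<omega> - Q t k \<omega>"

lemma F_subalg: "subalgebra M (F t)"
  unfolding state_alg_def by (rule gen_sigma_subalg) (auto intro: Q_meas)

lemma H_subalg: "subalgebra M (H t)"
  unfolding hist_alg_def by (rule gen_sigma_subalg) (auto intro: Q_meas p_meas)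

lemma F_sub_H: "subalgebra (H t) (F t)"
  unfolding hist_alg_def state_alg_def by (rule gen_sigma_mono) auto

lemma H_mono: "s \<le> t \<Longrightarrow> subalgebra (H t) (H s)"
  unfolding hist_alg_def by (rule gen_sigma_mono) (auto, metis le_trans)

lemma F_sfs: "sigma_finite_subalgebra M (F t)"
  by (rule finite_measure_subalgebra_is_sigma_finite, unfold_locales, rule F_subalg)

lemma H_sfs: "sigma_finite_subalgebra M (H t)"
  by (rule finite_measure_subalgebra_is_sigma_finite, unfold_locales, rule H_subalg)

lemma Q_F: "k \<in> {1..K} \<Longrightarrow> Q t k \<in> borel_measurable (F t)"
  unfolding state_alg_def by (rule gen_sigma_meas) auto

lemma Q_H: "k \<in> {1..K} \<Longrightarrow> s \<le> t \<Longrightarrow> Q s k \<in> borel_measurable (H t)"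
  unfolding hist_alg_def by (rule gen_sigma_meas) auto

lemma sub_meas: "subalgebra G G' \<Longrightarrow> f \<in> borel_measurable G' \<Longrightarrow> f \<in> borel_measurable G"
  by (rule measurable_from_subalg)

lemma L_meas_gen: "(\<And>k. k \<in> {1..K} \<Longrightarrow> Q t k \<in> borel_measurable G) \<Longrightarrow>
   (\<lambda>\<omega>. L t \<omega>) \<in> borel_measurable G \<and> (\<lambda>\<omega>. N t \<omega>) \<in> borel_measurable G \<and> (\<lambda>\<omega>. S t \<omega>) \<in> borel_measurable G"
  unfolding lnorm_def lyap_def by (auto intro!: borel_measurable_sum borel_measurable_times borel_measurable_power borel_measurable_abs)

lemma L_meas[measurable]: "(\<lambda>\<omega>. L t \<omega>) \<in> borel_measurable M" "(\<lambda>\<omega>. N t \<omega>) \<in> borel_measurable M" "(\<lambda>\<omega>. S t \<omega>) \<in> borel_measurable M"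
  using L_meas_gen[OF Q_meas] by auto

lemma L_F: "(\<lambda>\<omega>. L t \<omega>) \<in> borel_measurable (F t)" "(\<lambda>\<omega>. N t \<omega>) \<in> borel_measurable (F t)" "(\<lambda>\<omega>. S t \<omega>) \<in> borel_measurable (F t)"
  using L_meas_gen[OF Q_F] by auto

lemma L_H: "s \<le> t \<Longrightarrow> (\<lambda>\<omega>. L s \<omega>) \<in> borel_measurable (H t)" "s \<le> t \<Longrightarrow> (\<lambda>\<omega>. N s \<omega>) \<in> borel_measurable (H t)" "s \<le> t \<Longrightarrow> (\<lambda>\<omega>. S s \<omega>) \<in> borel_measurable (H t)"
  using L_meas_gen[OF Q_H] by auto

lemma dd_meas[measurable]: "k \<in> {1..K} \<Longrightarrow> dd t k \<in> borel_measurable M"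
  using Q_meas by measurable

lemma w_nonneg: "k \<in> {1..K} \<Longrightarrow> 0 \<le> w k"
  using w_pos less_imp_le by blast

lemma L_nonneg: "L t \<omega> \<ge> 0"
  unfolding lyap_def
proof (rule mult_nonneg_nonneg, simp, rule sum_nonneg)
  fix k assume "k \<in> {1..K}" then show "0 \<le> w k * (Q t k \<omega>)^2" by (simp add: w_nonneg)
qed

lemma N_sq: "(N t \<omega>)^2 = L t \<omega>"
  unfolding lnorm_def by (rule real_sqrt_pow2[OF L_nonneg])

lemma N_nonneg: "N t \<omega> \<ge> 0"
  unfolding lnorm_def by (rule real_sqrt_ge_zero[OF L_nonneg])

end


context T7 begin

lemma sq_sum_le: "((a::real) + b)^2 \<le> 2 * a^2 + 2 * b^2"
proof -
  have "0 \<le> (a - b)^2" by simp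
  then show ?thesis unfolding power2_sum power2_diff by linarith
qed

definition "cw = (\<Sum>k=1..K. 2 / w k)"
definition "kap = sqrt ((\<Sum>k=1..K. w k) / 2) + 1"
definition "D1 = 1 + max D 0"

lemma D1_pos: "D1 > 0" unfolding D1_def by simp

lemma cw_nonneg: "cw \<ge> 0"
  unfolding cw_def by (rule sum_nonneg) (simp add: w_nonneg)

lemma Wsum_nonneg: "0 \<le> (\<Sum>k=1..K. w k)"
  by (rule sum_nonneg) (simp add: w_nonneg)

lemma kap_pos: "kap > 0" unfolding kap_def
  by (rule add_nonneg_pos) (use Wsum_nonneg in auto)

lemma Qsq_le: assumes k: "k \<in> {1..K}" shows "(Q t k \<omega>)^2 \<le> cw * L t \<omega>"
proof -
  have "w k * (Q t k \<omega>)^2 \<le> (\<Sum>j=1..K. w j * (Q t j \<omega>)^2)"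
    by (rule member_le_sum) (use k in \<open>auto simp: w_nonneg\<close>)
  also have "\<dots> = 2 * L t \<omega>" unfolding lyap_def by simp
  finally have "(Q t k \<omega>)^2 \<le> (2 / w k) * L t \<omega>"
    using w_pos[OF k] by (simp add: field_simps)
  also have "\<dots> \<le> cw * L t \<omega>"
    unfolding cw_def
    by (rule mult_right_mono[OF _ L_nonneg], rule member_le_sum) (use k in \<open>auto simp: w_nonneg\<close>)
  finally show ?thesis .
qed

lemma sumQsq_le: "(\<Sum>k=1..K. (Q t k \<omega>)^2) \<le> real K * cw * L t \<omega>"
proof -
  have "(\<Sum>k=1..K. (Q t k \<omega>)^2) \<le> (\<Sum>k=1..K. cw * L t \<omega>)"
    by (rule sum_mono) (rule Qsq_le)
  then show ?thesis by simp
qed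

lemma Ssq_le: "(S t \<omega>)^2 \<le> real K * real K * cw * L t \<omega>"
proof -
  have "(S t \<omega>)^2 \<le> (\<Sum>k=1..K. \<bar>Q t k \<omega>\<bar>^2) * card {1..K}"
    by (rule sum_squared_le_sum_of_squares)
  also have "\<dots> = (\<Sum>k=1..K. (Q t k \<omega>)^2) * real K" by simp
  also have "\<dots> \<le> real K * cw * L t \<omega> * real K"
    by (rule mult_right_mono[OF sumQsq_le]) simp
  finally show ?thesis by (simp add: ac_simps)
qed

lemma S_nonneg: "S t \<omega> \<ge> 0" by (rule sum_nonneg) simp

lemma N_le_S: "N t \<omega> \<le> kap * S t \<omega>"
proof -
  have "L t \<omega> \<le> (1/2) * (\<Sum>k=1..K. w k * (S t \<omega>)^2)"
    unfolding lyap_def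
  proof (rule mult_left_mono[OF sum_mono])
    fix k assume k: "k \<in> {1..K}"
    have "\<bar>Q t k \<omega>\<bar> \<le> S t \<omega>" by (rule member_le_sum) (use k in auto)
    then have "(Q t k \<omega>)^2 \<le> (S t \<omega>)^2"
      by (metis abs_ge_zero power2_abs power_mono)
    then show "w k * (Q t k \<omega>)^2 \<le> w k * (S t \<omega>)^2"
      by (rule mult_left_mono) (use k in \<open>simp add: w_nonneg\<close>)
  qed simp
  also have "\<dots> = ((\<Sum>k=1..K. w k) / 2) * (S t \<omega>)^2" by (simp add: sum_distrib_right)
  finally have "N t \<omega> \<le> sqrt (((\<Sum>k=1..K. w k) / 2) * (S t \<omega>)^2)"
    unfolding lnorm_def by simp
  also have "\<dots> = sqrt ((\<Sum>k=1..K. w k) / 2) * S t \<omega>"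
    using S_nonneg[of t \<omega>] by (simp only: real_sqrt_mult real_sqrt_abs abs_of_nonneg)
  also have "\<dots> \<le> kap * S t \<omega>" unfolding kap_def
    using S_nonneg[of t \<omega>] by (simp add: distrib_right)
  finally show ?thesis .
qed

lemma L_step: "L (Suc t) \<omega> \<le> 2 * L t \<omega> + (\<Sum>k=1..K. w k * (dd t k \<omega>)^2)"
proof -
  have "L (Suc t) \<omega> = (1/2) * (\<Sum>k=1..K. w k * (Q t k \<omega> + dd t k \<omega>)^2)"
    unfolding lyap_def by simp
  also have "\<dots> \<le> (1/2) * (\<Sum>k=1..K. w k * (2 * (Q t k \<omega>)^2 + 2 * (dd t k \<omega>)^2))"
  proof (rule mult_left_mono[OF sum_mono])
    fix k assume k: "k \<in> {1..K}"
    have "(Q t k \<omega> + dd t k \<omega>)^2 \<le> 2 * (Q t k \<omega>)^2 + 2 * (dd t k \<omega>)^2"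
      by (rule sq_sum_le)
    then show "w k * (Q t k \<omega> + dd t k \<omega>)^2 \<le> w k * (2 * (Q t k \<omega>)^2 + 2 * (dd t k \<omega>)^2)"
      by (rule mult_left_mono) (use k in \<open>simp add: w_nonneg\<close>)
  qed simp
  also have "\<dots> = 2 * L t \<omega> + (\<Sum>k=1..K. w k * (dd t k \<omega>)^2)"
    unfolding lyap_def by (simp add: sum.distrib sum_distrib_left algebra_simps)
  finally show ?thesis .
qed

end


context T7 begin

lemma int_dom: "integrable M g \<Longrightarrow> f \<in> borel_measurable M \<Longrightarrow> (\<And>\<omega>. \<bar>f \<omega>\<bar> \<le> g \<omega>) \<Longrightarrow> integrable M (f::'a\<Rightarrow>real)"
  by (rule Bochner_Integration.integrable_bound[of M g f]) (auto intro: order_trans abs_ge_self)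

lemma d4_nn: assumes k: "k \<in> {1..K}"
  shows "(\<integral>\<^sup>+ \<omega>. ennreal (dd t k \<omega> ^ 4) \<partial>M) \<le> ennreal D1"
proof -
  interpret Ft: sigma_finite_subalgebra M "F t" by (rule F_sfs)
  have [measurable]: "Q t k \<in> borel_measurable M" "Q (Suc t) k \<in> borel_measurable M" using Q_meas k by auto
  have "(\<integral>\<^sup>+ \<omega>. ennreal (dd t k \<omega> ^ 4) \<partial>M) = (\<integral>\<^sup>+ \<omega>. 1 * ennreal (dd t k \<omega> ^ 4) \<partial>M)" by simp
  also have "\<dots> = (\<integral>\<^sup>+ \<omega>. 1 * nn_cond_exp M (F t) (\<lambda>\<omega>. ennreal (dd t k \<omega> ^ 4)) \<omega> \<partial>M)"
    by (rule Ft.nn_cond_exp_intg[symmetric]) auto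
  also have "\<dots> \<le> (\<integral>\<^sup>+ \<omega>. ennreal D \<partial>M)"
    by (rule nn_integral_mono_AE) (use fourth_moment[OF k, of t] in auto)
  also have "\<dots> = ennreal D" by (simp add: emeasure_space_1)
  also have "\<dots> \<le> ennreal D1" unfolding D1_def by (rule ennreal_leI) simp
  finally show ?thesis .
qed

lemma int_d4: assumes k: "k \<in> {1..K}" shows "integrable M (\<lambda>\<omega>. dd t k \<omega> ^ 4)"
proof -
  have [measurable]: "Q t k \<in> borel_measurable M" "Q (Suc t) k \<in> borel_measurable M" using Q_meas k by auto
  have "(\<integral>\<^sup>+ \<omega>. ennreal (norm (dd t k \<omega> ^ 4)) \<partial>M) = (\<integral>\<^sup>+ \<omega>. ennreal (dd t k \<omega> ^ 4) \<partial>M)"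
    by (simp add: zero_le_even_power)
  also have "\<dots> < \<infinity>" using d4_nn[OF k, of t] by (simp add: order_le_less_trans)
  finally show ?thesis by (subst integrable_iff_bounded) auto
qed

lemma int_L2: "integrable M (\<lambda>\<omega>. (L t \<omega>)^2)"
proof (induction t)
  case 0
  have "(\<integral>\<^sup>+ \<omega>. ennreal (norm ((L 0 \<omega>)^2)) \<partial>M) = (\<integral>\<^sup>+ \<omega>. ennreal (N 0 \<omega> ^ 4) \<partial>M)"
  proof (rule nn_integral_cong)
    fix \<omega> have "N 0 \<omega> ^ 4 = (N 0 \<omega> ^ 2)^2" by simp
    then show "ennreal (norm ((L 0 \<omega>)^2)) = ennreal (N 0 \<omega> ^ 4)" by (simp add: N_sq)
  qed
  also have "\<dots> < \<infinity>" by (rule init)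
  finally show ?case by (subst integrable_iff_bounded) auto
next
  case (Suc t)
  define E where "E \<omega> = (\<Sum>k=1..K. w k * (dd t k \<omega>)^2)" for \<omega>
  have E_nonneg: "E \<omega> \<ge> 0" for \<omega> unfolding E_def by (rule sum_nonneg) (simp add: w_nonneg)
  have bnd: "\<bar>(L (Suc t) \<omega>)^2\<bar> \<le> 8 * (L t \<omega>)^2 + 2 * real K * (\<Sum>k=1..K. (w k)^2 * dd t k \<omega> ^ 4)" for \<omega>
  proof -
    have "(L (Suc t) \<omega>)^2 \<le> (2 * L t \<omega> + E \<omega>)^2"
      using L_step[of t \<omega>] L_nonneg[of "Suc t" \<omega>] unfolding E_def
      by (intro power_mono) auto
    also have "\<dots> \<le> 2 * (2 * L t \<omega>)^2 + 2 * (E \<omega>)^2" by (rule sq_sum_le)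
    also have "(E \<omega>)^2 \<le> (\<Sum>k=1..K. (w k * (dd t k \<omega>)^2)^2) * card {1..K}"
      unfolding E_def by (rule sum_squared_le_sum_of_squares)
    also have "\<dots> = real K * (\<Sum>k=1..K. (w k)^2 * dd t k \<omega> ^ 4)"
      by (simp add: power_mult_distrib power_mult[symmetric] mult.commute)
    finally show ?thesis by (simp add: power_mult_distrib)
  qed
  have [measurable]: "(\<lambda>\<omega>. L (Suc t) \<omega>) \<in> borel_measurable M" by measurable
  show ?case
  proof (rule int_dom[OF _ _ bnd])
    show "integrable M (\<lambda>\<omega>. 8 * (L t \<omega>)^2 + 2 * real K * (\<Sum>k=1..K. (w k)^2 * dd t k \<omega> ^ 4))"
      using Suc int_d4 by (intro Bochner_Integration.integrable_add integrable_mult_right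
          Bochner_Integration.integrable_sum) auto
  qed measurable
qed

end


lemma abs_le_sq1: "\<bar>x::real\<bar> \<le> 1 + x^2"
proof (cases "\<bar>x\<bar> \<le> 1")
  case False
  then have "\<bar>x\<bar> * 1 \<le> \<bar>x\<bar> * \<bar>x\<bar>" by (intro mult_left_mono) auto
  then show ?thesis by (simp add: power2_eq_square)
qed (simp add: add_increasing2)

lemma prod_le_sq: "\<bar>(a::real) * b\<bar> \<le> a^2 + b^2"
proof -
  have "0 \<le> (\<bar>a\<bar> - \<bar>b\<bar>)^2" by simp
  then have "2 * (\<bar>a\<bar> * \<bar>b\<bar>) \<le> a^2 + b^2" unfolding power2_diff by simp
  moreover have "\<bar>a\<bar> * \<bar>b\<bar> \<ge> 0" by simp
  ultimately have "\<bar>a\<bar> * \<bar>b\<bar> \<le> a^2 + b^2" by linarith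
  then show ?thesis by (simp add: abs_mult)
qed

lemma cube_le: "(x::real) \<ge> 0 \<Longrightarrow> x^3 \<le> 1 + x^4"
proof (cases "x \<le> 1")
  case True
  assume "x \<ge> 0"
  then have "x^3 \<le> 1^3" using True by (intro power_mono) auto
  then show ?thesis by (simp add: add_increasing2)
next
  case False
  assume "x \<ge> 0"
  then have "x^3 * 1 \<le> x^3 * x" using False by (intro mult_left_mono) auto
  then show ?thesis by (simp add: power_Suc2[symmetric] eval_nat_numeral)
qed

context T7 begin

lemma S_meas2[measurable]: "(\<lambda>\<omega>. (S t \<omega>)^2) \<in> borel_measurable M"
  using L_meas(3) by (rule borel_measurable_power)

lemmas int_intros = Bochner_Integration.integrable_add integrable_mult_right integrable_mult_left
  Bochner_Integration.integrable_diff Bochner_Integration.integrable_sum integrable_const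

lemma N4: "N t \<omega> ^ 4 = (L t \<omega>)^2"
proof -
  have "N t \<omega> ^ 4 = (N t \<omega> ^ 2)^2" by simp
  then show ?thesis by (simp add: N_sq)
qed

lemma int_L: "integrable M (\<lambda>\<omega>. L t \<omega>)"
  by (rule int_dom[OF _ _ abs_le_sq1]) (auto intro!: int_intros int_L2)

lemma int_N3: "integrable M (\<lambda>\<omega>. N t \<omega> ^ 3)"
proof (rule int_dom[of "\<lambda>\<omega>. 1 + (L t \<omega>)^2"])
  fix \<omega> show "\<bar>N t \<omega> ^ 3\<bar> \<le> 1 + (L t \<omega>)^2"
    using cube_le[OF N_nonneg[of t \<omega>]] N_nonneg[of t \<omega>] by (simp add: N4)
qed (auto intro!: int_intros int_L2)

lemma int_N: "integrable M (\<lambda>\<omega>. N t \<omega>)"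
proof (rule int_dom[of "\<lambda>\<omega>. 1 + L t \<omega>"])
  fix \<omega> show "\<bar>N t \<omega>\<bar> \<le> 1 + L t \<omega>"
    using abs_le_sq1[of "N t \<omega>"] by (simp add: N_sq)
qed (auto intro!: int_intros int_L)

lemma int_Qsq: assumes k: "k \<in> {1..K}" shows "integrable M (\<lambda>\<omega>. (Q t k \<omega>)^2)"
proof (rule int_dom[of "\<lambda>\<omega>. cw * L t \<omega>"])
  fix \<omega> show "\<bar>(Q t k \<omega>)^2\<bar> \<le> cw * L t \<omega>" using Qsq_le[OF k] by simp
qed (use k Q_meas in \<open>auto intro: int_L\<close>)

lemma int_Q4: assumes k: "k \<in> {1..K}" shows "integrable M (\<lambda>\<omega>. (Q t k \<omega>)^4)"
proof (rule int_dom[of "\<lambda>\<omega>. cw^2 * (L t \<omega>)^2"])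
  fix \<omega>
  have "(Q t k \<omega>)^4 = ((Q t k \<omega>)^2)^2" by simp
  also have "\<dots> \<le> (cw * L t \<omega>)^2" by (rule power_mono[OF Qsq_le[OF k]]) simp
  finally show "\<bar>(Q t k \<omega>)^4\<bar> \<le> cw^2 * (L t \<omega>)^2" by (simp add: power_mult_distrib)
qed (use k Q_meas in \<open>auto intro: int_L2\<close>)

lemma int_S: "integrable M (\<lambda>\<omega>. S t \<omega>)"
proof (rule int_dom[of "\<lambda>\<omega>. 1 + real K * real K * cw * L t \<omega>"])
  fix \<omega> show "\<bar>S t \<omega>\<bar> \<le> 1 + real K * real K * cw * L t \<omega>"
    using abs_le_sq1[of "S t \<omega>"] Ssq_le[of t \<omega>] by linarith
qed (intro int_intros int_L L_meas)+

lemma int_S2: "integrable M (\<lambda>\<omega>. (S t \<omega>)^2)"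
proof (rule int_dom[of "\<lambda>\<omega>. real K * real K * cw * L t \<omega>"])
  fix \<omega> show "\<bar>(S t \<omega>)^2\<bar> \<le> real K * real K * cw * L t \<omega>"
    using Ssq_le[of t \<omega>] by simp
qed (intro int_intros int_L S_meas2)+

lemma int_LS: "integrable M (\<lambda>\<omega>. L t \<omega> * S t \<omega>)"
  by (rule int_dom[OF _ _ prod_le_sq]) (intro int_intros int_L2 int_S2 borel_measurable_times L_meas)+

lemma int_dL: "integrable M (\<lambda>\<omega>. L (Suc t) \<omega> - L t \<omega>)"
  by (auto intro!: int_intros int_L)

lemma int_dL2: "integrable M (\<lambda>\<omega>. (L (Suc t) \<omega> - L t \<omega>)^2)"
proof (rule int_dom[of "\<lambda>\<omega>. 2 * (L (Suc t) \<omega>)^2 + 2 * (L t \<omega>)^2"])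
  fix \<omega> show "\<bar>(L (Suc t) \<omega> - L t \<omega>)^2\<bar> \<le> 2 * (L (Suc t) \<omega>)^2 + 2 * (L t \<omega>)^2"
    using sq_sum_le[of "L (Suc t) \<omega>" "- L t \<omega>"] by simp
qed (auto intro!: int_intros int_L2)

lemma int_LdL: "integrable M (\<lambda>\<omega>. L t \<omega> * (L (Suc t) \<omega> - L t \<omega>))"
  by (rule int_dom[OF _ _ prod_le_sq]) (auto intro: int_L2 int_dL2)

lemma int_Q2d2: assumes k: "k \<in> {1..K}" shows "integrable M (\<lambda>\<omega>. (Q t k \<omega>)^2 * (dd t k \<omega>)^2)"
proof (rule int_dom[of "\<lambda>\<omega>. (Q t k \<omega>)^4 + (dd t k \<omega>)^4"])
  fix \<omega> show "\<bar>(Q t k \<omega>)^2 * (dd t k \<omega>)^2\<bar> \<le> (Q t k \<omega>)^4 + (dd t k \<omega>)^4"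
    using prod_le_sq[of "(Q t k \<omega>)^2" "(dd t k \<omega>)^2"] by (simp add: power_mult[symmetric])
qed (use k Q_meas in \<open>auto intro!: int_intros int_Q4 int_d4\<close>)

end


context T7 begin

lemma drift_F: "AE \<omega> in M. real_cond_exp M (F t) (\<lambda>\<omega>. L (Suc t) \<omega>) \<omega> \<le> L t \<omega> + B - \<epsilon> * S t \<omega>"
proof -
  interpret Ft: sigma_finite_subalgebra M "F t" by (rule F_sfs)
  interpret Ht: sigma_finite_subalgebra M "H t" by (rule H_sfs)
  have iB: "integrable M (\<lambda>\<omega>. B - \<epsilon> * S t \<omega>)" by (intro int_intros int_S)
  have 1: "AE \<omega> in M. real_cond_exp M (F t) (real_cond_exp M (H t) (\<lambda>\<omega>. L (Suc t) \<omega> - L t \<omega>)) \<omega>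
      = real_cond_exp M (F t) (\<lambda>\<omega>. L (Suc t) \<omega> - L t \<omega>) \<omega>"
    by (rule Ft.real_cond_exp_nested_subalg[OF H_subalg F_sub_H int_dL])
  have 2: "AE \<omega> in M. real_cond_exp M (F t) (real_cond_exp M (H t) (\<lambda>\<omega>. L (Suc t) \<omega> - L t \<omega>)) \<omega>
      \<le> real_cond_exp M (F t) (\<lambda>\<omega>. B - \<epsilon> * S t \<omega>) \<omega>"
    by (rule Ft.real_cond_exp_mono[OF drift Ht.real_cond_exp_int(1)[OF int_dL] iB])
  have 3: "AE \<omega> in M. real_cond_exp M (F t) (\<lambda>\<omega>. B - \<epsilon> * S t \<omega>) \<omega> = B - \<epsilon> * S t \<omega>"
    by (rule Ft.real_cond_exp_F_meas[OF iB]) (intro borel_measurable_diff borel_measurable_times borel_measurable_const L_F)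
  have 4: "AE \<omega> in M. real_cond_exp M (F t) (\<lambda>\<omega>. L (Suc t) \<omega> - L t \<omega>) \<omega>
     = real_cond_exp M (F t) (\<lambda>\<omega>. L (Suc t) \<omega>) \<omega> - real_cond_exp M (F t) (\<lambda>\<omega>. L t \<omega>) \<omega>"
    by (rule Ft.real_cond_exp_diff[OF int_L int_L])
  have 5: "AE \<omega> in M. real_cond_exp M (F t) (\<lambda>\<omega>. L t \<omega>) \<omega> = L t \<omega>"
    by (rule Ft.real_cond_exp_F_meas[OF int_L L_F(1)])
  show ?thesis using 1 2 3 4 5 by eventually_elim auto
qed

lemma drift_int_L: "(\<integral>\<omega>. L t \<omega> * (L (Suc t) \<omega> - L t \<omega>) \<partial>M) \<le> B * (\<integral>\<omega>. L t \<omega> \<partial>M) - \<epsilon> * (\<integral>\<omega>. L t \<omega> * S t \<omega> \<partial>M)"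
proof -
  interpret Ht: sigma_finite_subalgebra M "H t" by (rule H_sfs)
  have LH: "(\<lambda>\<omega>. L t \<omega>) \<in> borel_measurable (H t)" by (rule L_H) simp
  have "(\<integral>\<omega>. L t \<omega> * (L (Suc t) \<omega> - L t \<omega>) \<partial>M) = (\<integral>\<omega>. L t \<omega> * real_cond_exp M (H t) (\<lambda>\<omega>. L (Suc t) \<omega> - L t \<omega>) \<omega> \<partial>M)"
    by (rule Ht.real_cond_exp_intg(2)[symmetric, OF int_LdL LH]) measurable
  also have "\<dots> \<le> (\<integral>\<omega>. L t \<omega> * (B - \<epsilon> * S t \<omega>) \<partial>M)"
  proof (rule integral_mono_AE)
    show "integrable M (\<lambda>\<omega>. L t \<omega> * real_cond_exp M (H t) (\<lambda>\<omega>. L (Suc t) \<omega> - L t \<omega>) \<omega>)"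
      by (rule Ht.real_cond_exp_intg(1)[OF int_LdL LH]) measurable
    show "integrable M (\<lambda>\<omega>. L t \<omega> * (B - \<epsilon> * S t \<omega>))"
    proof -
      have eq: "(\<lambda>\<omega>. L t \<omega> * (B - \<epsilon> * S t \<omega>)) = (\<lambda>\<omega>. B * L t \<omega> - \<epsilon> * (L t \<omega> * S t \<omega>))"
        by (rule ext) (simp add: algebra_simps)
      show ?thesis unfolding eq by (intro int_intros int_L int_LS)
    qed
    show "AE \<omega> in M. L t \<omega> * real_cond_exp M (H t) (\<lambda>\<omega>. L (Suc t) \<omega> - L t \<omega>) \<omega> \<le> L t \<omega> * (B - \<epsilon> * S t \<omega>)"
      using drift[of t] by eventually_elim (rule mult_left_mono[OF _ L_nonneg])
  qed
  also have "\<dots> = (\<integral>\<omega>. B * L t \<omega> - \<epsilon> * (L t \<omega> * S t \<omega>) \<partial>M)"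
    by (rule Bochner_Integration.integral_cong) (auto simp: algebra_simps)
  also have "\<dots> = B * (\<integral>\<omega>. L t \<omega> \<partial>M) - \<epsilon> * (\<integral>\<omega>. L t \<omega> * S t \<omega> \<partial>M)"
    using int_L int_LS by simp
  finally show ?thesis .
qed

end


context T7 begin

lemma nnce_d2: assumes k: "k \<in> {1..K}"
  shows "AE \<omega> in M. nn_cond_exp M (F t) (\<lambda>\<omega>. ennreal ((dd t k \<omega>)^2)) \<omega> \<le> ennreal D1"
proof -
  interpret Ft: sigma_finite_subalgebra M "F t" by (rule F_sfs)
  have [measurable]: "Q t k \<in> borel_measurable M" "Q (Suc t) k \<in> borel_measurable M" using Q_meas k by auto
  have pw: "ennreal ((dd t k \<omega>)^2) \<le> 1 + ennreal (dd t k \<omega> ^ 4)" for \<omega>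
  proof -
    have "(dd t k \<omega>)^2 \<le> 1 + ((dd t k \<omega>)^2)^2" using abs_le_sq1[of "(dd t k \<omega>)^2"] by simp
    then have "ennreal ((dd t k \<omega>)^2) \<le> ennreal (1 + dd t k \<omega> ^ 4)"
      by (intro ennreal_leI) (simp add: power_mult[symmetric])
    also have "\<dots> = 1 + ennreal (dd t k \<omega> ^ 4)" by (simp add: ennreal_plus zero_le_even_power)
    finally show ?thesis .
  qed
  have 1: "AE \<omega> in M. nn_cond_exp M (F t) (\<lambda>\<omega>. ennreal ((dd t k \<omega>)^2)) \<omega>
      \<le> nn_cond_exp M (F t) (\<lambda>\<omega>. 1 + ennreal (dd t k \<omega> ^ 4)) \<omega>"
    by (rule Ft.nn_cond_exp_mono) (auto simp: pw)
  have 2: "AE \<omega> in M. nn_cond_exp M (F t) (\<lambda>\<omega>. 1) \<omega> + nn_cond_exp M (F t) (\<lambda>\<omega>. ennreal (dd t k \<omega> ^ 4)) \<omega>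
      = nn_cond_exp M (F t) (\<lambda>\<omega>. 1 + ennreal (dd t k \<omega> ^ 4)) \<omega>"
    by (rule Ft.nn_cond_exp_sum) auto
  have 3: "AE \<omega> in M. (\<lambda>\<omega>. 1::ennreal) \<omega> = nn_cond_exp M (F t) (\<lambda>\<omega>. 1) \<omega>"
    by (rule Ft.nn_cond_exp_F_meas) simp
  have 4: "1 + ennreal D \<le> ennreal D1" unfolding D1_def
    by (subst ennreal_plus) (auto intro: ennreal_leI)
  show ?thesis using 1 2 3 fourth_moment[OF k, of t]
  proof eventually_elim
    case (elim \<omega>)
    note e = elim
    have "nn_cond_exp M (F t) (\<lambda>\<omega>. ennreal ((dd t k \<omega>)^2)) \<omega> \<le> nn_cond_exp M (F t) (\<lambda>\<omega>. 1 + ennreal (dd t k \<omega> ^ 4)) \<omega>"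
      by (rule e(1))
    also have "\<dots> = 1 + nn_cond_exp M (F t) (\<lambda>\<omega>. ennreal (dd t k \<omega> ^ 4)) \<omega>"
      using e(2,3) by simp
    also have "\<dots> \<le> 1 + ennreal D" using e(4) by (rule add_left_mono)
    also have "\<dots> \<le> ennreal D1" by (rule 4)
    finally show ?case .
  qed
qed

lemma int_Q2d2_le: assumes k: "k \<in> {1..K}"
  shows "(\<integral>\<omega>. (Q t k \<omega>)^2 * (dd t k \<omega>)^2 \<partial>M) \<le> D1 * (\<integral>\<omega>. (Q t k \<omega>)^2 \<partial>M)"
proof -
  interpret Ft: sigma_finite_subalgebra M "F t" by (rule F_sfs)
  have [measurable]: "Q t k \<in> borel_measurable M" "Q (Suc t) k \<in> borel_measurable M" using Q_meas k by auto
  have QF: "(\<lambda>\<omega>. ennreal ((Q t k \<omega>)^2)) \<in> borel_measurable (F t)"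
    using Q_F[OF k] by measurable
  have "ennreal (\<integral>\<omega>. (Q t k \<omega>)^2 * (dd t k \<omega>)^2 \<partial>M) = (\<integral>\<^sup>+\<omega>. ennreal ((Q t k \<omega>)^2 * (dd t k \<omega>)^2) \<partial>M)"
    by (rule nn_integral_eq_integral[symmetric]) (auto intro: int_Q2d2[OF k])
  also have "\<dots> = (\<integral>\<^sup>+\<omega>. ennreal ((Q t k \<omega>)^2) * ennreal ((dd t k \<omega>)^2) \<partial>M)"
    by (simp add: ennreal_mult)
  also have "\<dots> = (\<integral>\<^sup>+\<omega>. ennreal ((Q t k \<omega>)^2) * nn_cond_exp M (F t) (\<lambda>\<omega>. ennreal ((dd t k \<omega>)^2)) \<omega> \<partial>M)"
    by (rule Ft.nn_cond_exp_intg[symmetric, OF QF]) simp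
  also have "\<dots> \<le> (\<integral>\<^sup>+\<omega>. ennreal ((Q t k \<omega>)^2) * ennreal D1 \<partial>M)"
  proof (rule nn_integral_mono_AE)
    show "AE \<omega> in M. ennreal ((Q t k \<omega>)^2) * nn_cond_exp M (F t) (\<lambda>\<omega>. ennreal ((dd t k \<omega>)^2)) \<omega> \<le> ennreal ((Q t k \<omega>)^2) * ennreal D1"
      using nnce_d2[OF k, of t] by eventually_elim (rule mult_left_mono, auto)
  qed
  also have "\<dots> = (\<integral>\<^sup>+\<omega>. ennreal (D1 * (Q t k \<omega>)^2) \<partial>M)"
    using D1_pos by (simp add: ennreal_mult mult.commute)
  also have "\<dots> = ennreal (\<integral>\<omega>. D1 * (Q t k \<omega>)^2 \<partial>M)"
    by (rule nn_integral_eq_integral) (use D1_pos in \<open>auto intro!: int_intros int_Qsq[OF k]\<close>)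
  finally have "(\<integral>\<omega>. (Q t k \<omega>)^2 * (dd t k \<omega>)^2 \<partial>M) \<le> (\<integral>\<omega>. D1 * (Q t k \<omega>)^2 \<partial>M)"
    using D1_pos by (subst (asm) ennreal_le_iff) (auto intro!: integral_nonneg_AE)
  then show ?thesis by simp
qed

lemma int_d4_le: assumes k: "k \<in> {1..K}"
  shows "(\<integral>\<omega>. (dd t k \<omega>)^4 \<partial>M) \<le> D1"
proof -
  have [measurable]: "Q t k \<in> borel_measurable M" "Q (Suc t) k \<in> borel_measurable M" using Q_meas k by auto
  have "ennreal (\<integral>\<omega>. (dd t k \<omega>)^4 \<partial>M) = (\<integral>\<^sup>+\<omega>. ennreal ((dd t k \<omega>)^4) \<partial>M)"
    by (rule nn_integral_eq_integral[symmetric]) (auto intro: int_d4[OF k] simp: zero_le_even_power)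
  also have "\<dots> \<le> ennreal D1" by (rule d4_nn[OF k])
  finally show ?thesis using D1_pos by (subst (asm) ennreal_le_iff) auto
qed

lemma dL_expand: "L (Suc t) \<omega> - L t \<omega> = (\<Sum>k=1..K. w k * (Q t k \<omega> * dd t k \<omega> + (dd t k \<omega>)^2 / 2))"
proof -
  have "\<And>k. w k * (Q t k \<omega> * dd t k \<omega> + (dd t k \<omega>)^2 / 2) = 1/2 * (w k * (Q (Suc t) k \<omega>)^2) - 1/2 * (w k * (Q t k \<omega>)^2)"
    by (simp add: power2_eq_square field_simps)
  then show ?thesis unfolding lyap_def by (simp add: sum_subtractf sum_distrib_left)
qed

definition "Wq = real K * (\<Sum>k=1..K. (w k)^2)"

lemma Wq_nonneg: "Wq \<ge> 0" unfolding Wq_def by (simp add: sum_nonneg)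

lemma dL2_pw: "(L (Suc t) \<omega> - L t \<omega>)^2 \<le> real K * (\<Sum>k=1..K. (w k)^2 * (2 * ((Q t k \<omega>)^2 * (dd t k \<omega>)^2) + (dd t k \<omega>)^4 / 2))"
proof -
  have "(L (Suc t) \<omega> - L t \<omega>)^2 \<le> (\<Sum>k=1..K. (w k * (Q t k \<omega> * dd t k \<omega> + (dd t k \<omega>)^2 / 2))^2) * card {1..K}"
    unfolding dL_expand by (rule sum_squared_le_sum_of_squares)
  also have "\<dots> \<le> (\<Sum>k=1..K. (w k)^2 * (2 * ((Q t k \<omega>)^2 * (dd t k \<omega>)^2) + (dd t k \<omega>)^4 / 2)) * card {1..K}"
  proof (rule mult_right_mono[OF sum_mono])
    fix k
    have "(Q t k \<omega> * dd t k \<omega> + (dd t k \<omega>)^2 / 2)^2 \<le> 2 * (Q t k \<omega> * dd t k \<omega>)^2 + 2 * ((dd t k \<omega>)^2 / 2)^2"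
      by (rule sq_sum_le)
    also have "\<dots> = 2 * ((Q t k \<omega>)^2 * (dd t k \<omega>)^2) + (dd t k \<omega>)^4 / 2"
      by (simp add: power_mult_distrib power_divide power_mult[symmetric])
    finally show "(w k * (Q t k \<omega> * dd t k \<omega> + (dd t k \<omega>)^2 / 2))^2 \<le> (w k)^2 * (2 * ((Q t k \<omega>)^2 * (dd t k \<omega>)^2) + (dd t k \<omega>)^4 / 2)"
      unfolding power_mult_distrib by (rule mult_left_mono) simp
  qed simp
  finally show ?thesis by (simp add: mult.commute)
qed

lemma int_dL2_le: "(\<integral>\<omega>. (L (Suc t) \<omega> - L t \<omega>)^2 \<partial>M) \<le> Wq * (2 * D1 * cw * (\<integral>\<omega>. L t \<omega> \<partial>M) + D1 / 2)"
proof -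
  have ik: "integrable M (\<lambda>\<omega>. (w k)^2 * (2 * ((Q t k \<omega>)^2 * (dd t k \<omega>)^2) + (dd t k \<omega>)^4 / 2))" if k: "k \<in> {1..K}" for k
    by (intro int_intros int_Q2d2[OF k] int_d4[OF k] integrable_divide_zero)
  have "(\<integral>\<omega>. (L (Suc t) \<omega> - L t \<omega>)^2 \<partial>M) \<le> (\<integral>\<omega>. real K * (\<Sum>k=1..K. (w k)^2 * (2 * ((Q t k \<omega>)^2 * (dd t k \<omega>)^2) + (dd t k \<omega>)^4 / 2)) \<partial>M)"
    by (rule integral_mono[OF int_dL2 _ dL2_pw]) (intro int_intros ik)
  also have "\<dots> = real K * (\<Sum>k=1..K. (w k)^2 * (2 * (\<integral>\<omega>. (Q t k \<omega>)^2 * (dd t k \<omega>)^2 \<partial>M) + (\<integral>\<omega>. (dd t k \<omega>)^4 \<partial>M) / 2))"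
  proof -
    have "(\<integral>\<omega>. (\<Sum>k=1..K. (w k)^2 * (2 * ((Q t k \<omega>)^2 * (dd t k \<omega>)^2) + (dd t k \<omega>)^4 / 2)) \<partial>M)
      = (\<Sum>k=1..K. (\<integral>\<omega>. (w k)^2 * (2 * ((Q t k \<omega>)^2 * (dd t k \<omega>)^2) + (dd t k \<omega>)^4 / 2) \<partial>M))"
      by (rule Bochner_Integration.integral_sum) (rule ik)
    also have "\<dots> = (\<Sum>k=1..K. (w k)^2 * (2 * (\<integral>\<omega>. (Q t k \<omega>)^2 * (dd t k \<omega>)^2 \<partial>M) + (\<integral>\<omega>. (dd t k \<omega>)^4 \<partial>M) / 2))"
    proof (rule sum.cong[OF refl])
      fix k assume k: "k \<in> {1..K}"
      show "(\<integral>\<omega>. (w k)^2 * (2 * ((Q t k \<omega>)^2 * (dd t k \<omega>)^2) + (dd t k \<omega>)^4 / 2) \<partial>M)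
        = (w k)^2 * (2 * (\<integral>\<omega>. (Q t k \<omega>)^2 * (dd t k \<omega>)^2 \<partial>M) + (\<integral>\<omega>. (dd t k \<omega>)^4 \<partial>M) / 2)"
        using int_Q2d2[OF k] int_d4[OF k] by simp
    qed
    finally show ?thesis by simp
  qed
  also have "\<dots> \<le> real K * (\<Sum>k=1..K. (w k)^2 * (2 * D1 * cw * (\<integral>\<omega>. L t \<omega> \<partial>M) + D1 / 2))"
  proof (rule mult_left_mono[OF sum_mono])
    fix k assume k: "k \<in> {1..K}"
    have "(\<integral>\<omega>. (Q t k \<omega>)^2 \<partial>M) \<le> (\<integral>\<omega>. cw * L t \<omega> \<partial>M)"
      by (rule integral_mono[OF int_Qsq[OF k] _ Qsq_le[OF k]]) (intro int_intros int_L)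
    then have a: "(\<integral>\<omega>. (Q t k \<omega>)^2 \<partial>M) \<le> cw * (\<integral>\<omega>. L t \<omega> \<partial>M)" by simp
    have "2 * (\<integral>\<omega>. (Q t k \<omega>)^2 * (dd t k \<omega>)^2 \<partial>M) + (\<integral>\<omega>. (dd t k \<omega>)^4 \<partial>M) / 2
       \<le> 2 * (D1 * (cw * (\<integral>\<omega>. L t \<omega> \<partial>M))) + D1 / 2"
      using int_Q2d2_le[OF k, of t] int_d4_le[OF k, of t] mult_left_mono[OF a, of D1] D1_pos by linarith
    then show "(w k)^2 * (2 * (\<integral>\<omega>. (Q t k \<omega>)^2 * (dd t k \<omega>)^2 \<partial>M) + (\<integral>\<omega>. (dd t k \<omega>)^4 \<partial>M) / 2)
      \<le> (w k)^2 * (2 * D1 * cw * (\<integral>\<omega>. L t \<omega> \<partial>M) + D1 / 2)"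
      by (intro mult_left_mono) (simp_all add: ac_simps)
  qed simp
  also have "\<dots> = Wq * (2 * D1 * cw * (\<integral>\<omega>. L t \<omega> \<partial>M) + D1 / 2)"
    unfolding Wq_def by (simp add: sum_distrib_right)
  finally show ?thesis .
qed

end


lemma sq_le_cube: assumes "(x::real) \<ge> 0" "\<delta> > 0" shows "x^2 \<le> \<delta> * x^3 + 1 / \<delta>^2"
proof (cases "\<delta> * x \<ge> 1")
  case True
  have "x^2 * 1 \<le> x^2 * (\<delta> * x)" by (rule mult_left_mono[OF True]) simp
  then have "x^2 \<le> \<delta> * x^3" by (simp add: power3_eq_cube power2_eq_square ac_simps)
  moreover have "0 \<le> 1 / \<delta>^2" by simp
  ultimately show ?thesis by linarith
next
  case False
  then have "x < 1 / \<delta>" using assms by (simp add: field_simps)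
  then have "x^2 \<le> (1/\<delta>)^2" using assms by (intro power_mono) auto
  moreover have "0 \<le> \<delta> * x^3" using assms by simp
  ultimately show ?thesis by (simp add: power_divide)
qed

lemma comb: fixes a b c d x y z AA B C1 C2 C3 dl kap \<epsilon> :: real
  assumes e1: "a = b + 2*c + d" and e2: "d \<le> C1*x + C2" and e3: "c \<le> B*x - \<epsilon>*y"
    and e4: "x \<le> dl*z + 1/dl^2" and e5: "z \<le> kap*y" and AA: "AA = 2*B + C1"
    and AAdl: "AA*dl = \<epsilon>/kap" and C3: "C3 = AA/dl^2 + C2" and pos: "AA > 0" "\<epsilon> > 0" "kap > 0"
  shows "a + (\<epsilon>/kap)*z \<le> b + C3"
proof -
  have f1: "AA*x \<le> AA*(dl*z + 1/dl^2)" by (rule mult_left_mono[OF e4]) (use pos in simp)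
  have f2a: "AA*(dl*z + 1/dl^2) = (AA*dl)*z + AA/dl^2" by (simp add: algebra_simps)
  have f2b: "(AA*dl)*z = (\<epsilon>/kap)*z" by (simp only: AAdl)
  have f3: "(\<epsilon>/kap)*z \<le> (\<epsilon>/kap)*(kap*y)" by (rule mult_left_mono[OF e5]) (use pos in simp)
  have f4: "(\<epsilon>/kap)*(kap*y) = \<epsilon>*y" using pos by simp
  have f5: "AA*x = 2*(B*x) + C1*x" using AA by (simp add: algebra_simps)
  have f6: "2*c \<le> 2*(B*x) - 2*(\<epsilon>*y)" using e3 by simp
  show ?thesis using e1 e2 f1 f2a f2b f3 f4 f5 f6 C3 by linarith
qed
context T7 begin

definition "C1 = 2 * Wq * D1 * cw"
definition "C2 = Wq * D1 / 2"
definition "AA = 2 * B + C1"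
definition "dl = \<epsilon> / (kap * AA)"
definition "C3 = AA / dl^2 + C2"

lemma C1_nonneg: "C1 \<ge> 0" unfolding C1_def using Wq_nonneg D1_pos cw_nonneg by simp
lemma C2_nonneg: "C2 \<ge> 0" unfolding C2_def using Wq_nonneg D1_pos by simp
lemma AA_pos: "AA > 0" unfolding AA_def using C1_nonneg B_pos by simp
lemma dl_pos: "dl > 0" unfolding dl_def using AA_pos kap_pos eps_pos by simp
lemma C3_nonneg: "C3 \<ge> 0" unfolding C3_def using AA_pos dl_pos C2_nonneg by simp

lemma key_ineq: "(\<integral>\<omega>. (L (Suc t) \<omega>)^2 \<partial>M) + (\<epsilon> / kap) * (\<integral>\<omega>. N t \<omega> ^ 3 \<partial>M) \<le> (\<integral>\<omega>. (L t \<omega>)^2 \<partial>M) + C3"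
proof -
  have e1: "(\<integral>\<omega>. (L (Suc t) \<omega>)^2 \<partial>M) = (\<integral>\<omega>. (L t \<omega>)^2 \<partial>M) + 2 * (\<integral>\<omega>. L t \<omega> * (L (Suc t) \<omega> - L t \<omega>) \<partial>M)
      + (\<integral>\<omega>. (L (Suc t) \<omega> - L t \<omega>)^2 \<partial>M)"
  proof -
    have "(\<integral>\<omega>. (L (Suc t) \<omega>)^2 \<partial>M) = (\<integral>\<omega>. (L t \<omega>)^2 + 2 * (L t \<omega> * (L (Suc t) \<omega> - L t \<omega>)) + (L (Suc t) \<omega> - L t \<omega>)^2 \<partial>M)"
      by (rule Bochner_Integration.integral_cong) (auto simp: power2_eq_square algebra_simps)
    also have "\<dots> = (\<integral>\<omega>. (L t \<omega>)^2 \<partial>M) + 2 * (\<integral>\<omega>. L t \<omega> * (L (Suc t) \<omega> - L t \<omega>) \<partial>M)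
      + (\<integral>\<omega>. (L (Suc t) \<omega> - L t \<omega>)^2 \<partial>M)"
      using int_L2[of t] int_LdL[of t] int_dL2[of t] by (simp add: Bochner_Integration.integral_add)
    finally show ?thesis .
  qed
  have e2: "(\<integral>\<omega>. (L (Suc t) \<omega> - L t \<omega>)^2 \<partial>M) \<le> C1 * (\<integral>\<omega>. L t \<omega> \<partial>M) + C2"
  proof -
    have eq: "Wq * (2 * D1 * cw * x + D1 / 2) = C1 * x + C2" for x
      unfolding C1_def C2_def by (simp add: algebra_simps)
    show ?thesis using int_dL2_le[of t] unfolding eq .
  qed
  have e3: "(\<integral>\<omega>. N t \<omega> ^ 3 \<partial>M) \<le> kap * (\<integral>\<omega>. L t \<omega> * S t \<omega> \<partial>M)"
  proof -
    have "(\<integral>\<omega>. N t \<omega> ^ 3 \<partial>M) \<le> (\<integral>\<omega>. kap * (L t \<omega> * S t \<omega>) \<partial>M)"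
    proof (rule integral_mono[OF int_N3])
      show "integrable M (\<lambda>\<omega>. kap * (L t \<omega> * S t \<omega>))" by (intro int_intros int_LS)
      fix \<omega>
      have "N t \<omega> ^ 3 = L t \<omega> * N t \<omega>" by (simp add: power3_eq_cube N_sq[symmetric] power2_eq_square)
      also have "\<dots> \<le> L t \<omega> * (kap * S t \<omega>)" by (rule mult_left_mono[OF N_le_S L_nonneg])
      finally show "N t \<omega> ^ 3 \<le> kap * (L t \<omega> * S t \<omega>)" by (simp add: ac_simps)
    qed
    then show ?thesis by simp
  qed
  have e4: "(\<integral>\<omega>. L t \<omega> \<partial>M) \<le> dl * (\<integral>\<omega>. N t \<omega> ^ 3 \<partial>M) + 1 / dl^2"
  proof -
    have "(\<integral>\<omega>. L t \<omega> \<partial>M) \<le> (\<integral>\<omega>. dl * N t \<omega> ^ 3 + 1 / dl^2 \<partial>M)"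
    proof (rule integral_mono[OF int_L])
      show "integrable M (\<lambda>\<omega>. dl * N t \<omega> ^ 3 + 1 / dl^2)" by (intro int_intros int_N3)
      fix \<omega> show "L t \<omega> \<le> dl * N t \<omega> ^ 3 + 1 / dl^2"
        using sq_le_cube[OF N_nonneg dl_pos, of t \<omega>] by (simp add: N_sq)
    qed
    then show ?thesis using int_N3[of t] by (simp add: prob_space)
  qed
  have AAdl: "AA * dl = \<epsilon> / kap" unfolding dl_def using AA_pos kap_pos by simp
  show ?thesis by (rule comb[OF e1 e2 drift_int_L e4 e3 AA_def AAdl C3_def AA_pos eps_pos kap_pos])
qed

lemma N3_int_nonneg: "(\<integral>\<omega>. N t \<omega> ^ 3 \<partial>M) \<ge> 0"
  by (rule integral_nonneg_AE) (simp add: N_nonneg)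

lemma telescope: "(\<epsilon> / kap) * (\<Sum>t<m. (\<integral>\<omega>. N t \<omega> ^ 3 \<partial>M)) + (\<integral>\<omega>. (L m \<omega>)^2 \<partial>M) \<le> (\<integral>\<omega>. (L 0 \<omega>)^2 \<partial>M) + C3 * real m"
proof (induction m)
  case 0 then show ?case by simp
next
  case (Suc m)
  have "(\<epsilon> / kap) * (\<Sum>t<Suc m. (\<integral>\<omega>. N t \<omega> ^ 3 \<partial>M)) + (\<integral>\<omega>. (L (Suc m) \<omega>)^2 \<partial>M)
     = (\<epsilon> / kap) * (\<Sum>t<m. (\<integral>\<omega>. N t \<omega> ^ 3 \<partial>M)) + ((\<integral>\<omega>. (L (Suc m) \<omega>)^2 \<partial>M) + (\<epsilon> / kap) * (\<integral>\<omega>. N m \<omega> ^ 3 \<partial>M))"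
    by (simp add: algebra_simps)
  also have "\<dots> \<le> (\<epsilon> / kap) * (\<Sum>t<m. (\<integral>\<omega>. N t \<omega> ^ 3 \<partial>M)) + ((\<integral>\<omega>. (L m \<omega>)^2 \<partial>M) + C3)"
    using key_ineq[of m] by linarith
  also have "\<dots> \<le> (\<integral>\<omega>. (L 0 \<omega>)^2 \<partial>M) + C3 * real (Suc m)"
    using Suc.IH by (simp add: algebra_simps)
  finally show ?case .
qed

lemma L2_int_nonneg: "(\<integral>\<omega>. (L t \<omega>)^2 \<partial>M) \<ge> 0"
  by (rule integral_nonneg_AE) simp

lemma L2_growth: "(\<integral>\<omega>. (L t \<omega>)^2 \<partial>M) \<le> (\<integral>\<omega>. (L 0 \<omega>)^2 \<partial>M) + C3 * real t"
proof -
  have "0 \<le> (\<epsilon> / kap) * (\<Sum>s<t. (\<integral>\<omega>. N s \<omega> ^ 3 \<partial>M))"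
    using eps_pos kap_pos by (intro mult_nonneg_nonneg sum_nonneg N3_int_nonneg) auto
  then show ?thesis using telescope[of t] by linarith
qed

definition "bb = kap / \<epsilon> * ((\<integral>\<omega>. (L 0 \<omega>)^2 \<partial>M) + C3) + 1"

lemma bb_pos: "bb > 0"
  unfolding bb_def using kap_pos eps_pos L2_int_nonneg[of 0] C3_nonneg by (simp add: add_nonneg_pos)

lemma sum_N3: assumes "m \<ge> 1" shows "(\<Sum>t<m. (\<integral>\<omega>. N t \<omega> ^ 3 \<partial>M)) \<le> bb * real m"
proof -
  have "(\<epsilon> / kap) * (\<Sum>t<m. (\<integral>\<omega>. N t \<omega> ^ 3 \<partial>M)) \<le> (\<integral>\<omega>. (L 0 \<omega>)^2 \<partial>M) + C3 * real m"
    using telescope[of m] L2_int_nonneg[of m] by linarith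
  then have "(\<Sum>t<m. (\<integral>\<omega>. N t \<omega> ^ 3 \<partial>M)) \<le> kap / \<epsilon> * ((\<integral>\<omega>. (L 0 \<omega>)^2 \<partial>M) + C3 * real m)"
    using eps_pos kap_pos by (simp add: field_simps)
  also have "\<dots> \<le> kap / \<epsilon> * (((\<integral>\<omega>. (L 0 \<omega>)^2 \<partial>M) + C3) * real m)"
  proof (rule mult_left_mono)
    have "(\<integral>\<omega>. (L 0 \<omega>)^2 \<partial>M) * 1 \<le> (\<integral>\<omega>. (L 0 \<omega>)^2 \<partial>M) * real m"
      using assms L2_int_nonneg[of 0] by (intro mult_left_mono) auto
    then show "(\<integral>\<omega>. (L 0 \<omega>)^2 \<partial>M) + C3 * real m \<le> ((\<integral>\<omega>. (L 0 \<omega>)^2 \<partial>M) + C3) * real m"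
      by (simp add: algebra_simps)
  qed (use eps_pos kap_pos in simp)
  also have "\<dots> \<le> bb * real m" unfolding bb_def by (simp add: algebra_simps)
  finally show ?thesis .
qed

lemma part_b: "\<exists>b > 0. \<forall>m::nat. m \<ge> 1 \<longrightarrow>
        (\<Sum>t<m. \<integral>\<^sup>+ \<omega>. ennreal (lnorm w K (\<lambda>k. Q t k \<omega>) ^ 3) \<partial>M) \<le> ennreal (b * real m)"
proof (intro exI[of _ bb] conjI allI impI bb_pos)
  fix m :: nat assume m: "m \<ge> 1"
  have "(\<Sum>t<m. \<integral>\<^sup>+ \<omega>. ennreal (N t \<omega> ^ 3) \<partial>M) = (\<Sum>t<m. ennreal (\<integral>\<omega>. N t \<omega> ^ 3 \<partial>M))"
    by (rule sum.cong[OF refl], rule nn_integral_eq_integral) (auto intro: int_N3 simp: N_nonneg)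
  also have "\<dots> = ennreal (\<Sum>t<m. (\<integral>\<omega>. N t \<omega> ^ 3 \<partial>M))"
    by (rule sum_ennreal) (rule N3_int_nonneg)
  also have "\<dots> \<le> ennreal (bb * real m)" by (rule ennreal_leI[OF sum_N3[OF m]])
  finally show "(\<Sum>t<m. \<integral>\<^sup>+ \<omega>. ennreal (N t \<omega> ^ 3) \<partial>M) \<le> ennreal (bb * real m)" .
qed

end


lemma sqrt_le_amgm: assumes "(x::real) \<ge> 0" "s > 0" shows "sqrt x \<le> x / (2 * s) + s / 2"
proof -
  have "0 \<le> (sqrt x - s)^2" by simp
  then have "2 * sqrt x * s \<le> x + s^2" using assms unfolding power2_diff by simp
  then show ?thesis using assms by (simp add: field_simps power2_eq_square)
qed

lemma part_a_arith:
  fixes n E Lv Sv B \<epsilon> kap :: real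
  assumes pos: "B > 0" "\<epsilon> > 0" "kap > 0" and nge: "n \<ge> 2 * B * kap / \<epsilon>"
    and Lv: "Lv = n^2" and E: "E \<le> Lv + B - \<epsilon> * Sv" and S: "n \<le> kap * Sv"
  shows "E / (2 * n) + n / 2 \<le> n - \<epsilon> / (4 * kap)"
proof -
  have a0: "2 * B * kap / \<epsilon> > 0" using pos by simp
  then have npos: "n > 0" using nge by linarith
  have "B * (2 * kap) \<le> n * \<epsilon>" using nge pos by (simp add: field_simps)
  then have B1: "B \<le> \<epsilon> * n / (2 * kap)" using pos by (simp add: field_simps)
  have "\<epsilon> * n \<le> \<epsilon> * (kap * Sv)" using S pos by (intro mult_left_mono) auto
  then have S1: "\<epsilon> * n / kap \<le> \<epsilon> * Sv" using pos by (simp add: field_simps)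
  have "E \<le> n^2 - \<epsilon> * n / (2 * kap)"
  proof -
    have "\<epsilon> * n / kap = \<epsilon> * n / (2 * kap) + \<epsilon> * n / (2 * kap)" by (simp add: field_simps)
    then show ?thesis using E Lv B1 S1 by linarith
  qed
  then have "E / (2 * n) \<le> (n^2 - \<epsilon> * n / (2 * kap)) / (2 * n)"
    using npos by (intro divide_right_mono) auto
  also have "\<dots> = n / 2 - \<epsilon> / (4 * kap)" using npos pos by (simp add: field_simps power2_eq_square)
  finally show ?thesis by simp
qed

context T7 begin

lemma part_a: "\<exists>c > 0. \<exists>a > 0. \<forall>t. AE \<omega> in M.
        lnorm w K (\<lambda>k. Q t k \<omega>) \<ge> a \<longrightarrow>
        real_cond_exp M (state_alg M K Q t) (\<lambda>\<omega>. lnorm w K (\<lambda>k. Q (Suc t) k \<omega>)) \<omega>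
          \<le> lnorm w K (\<lambda>k. Q t k \<omega>) - c"
proof -
  have cpos: "\<epsilon> / (4 * kap) > 0" using eps_pos kap_pos by simp
  have a_pos: "2 * B * kap / \<epsilon> > 0" using eps_pos kap_pos B_pos by simp
  have main: "AE \<omega> in M. 2 * B * kap / \<epsilon> \<le> N t \<omega> \<longrightarrow> real_cond_exp M (F t) (\<lambda>\<omega>. N (Suc t) \<omega>) \<omega> \<le> N t \<omega> - \<epsilon> / (4 * kap)" for t
  proof -
  define a where "a = 2 * B * kap / \<epsilon>"
  have apos: "a > 0" unfolding a_def by (rule a_pos)
  interpret Ft: sigma_finite_subalgebra M "F t" by (rule F_sfs)
  define m where "m \<omega> = max (N t \<omega>) a" for \<omega>
  define h where "h \<omega> = 1 / (2 * m \<omega>)" for \<omega>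
  have mpos: "m \<omega> > 0" for \<omega> unfolding m_def using apos by simp
  have mF: "m \<in> borel_measurable (F t)" unfolding m_def using L_F(2) by measurable
  have hF: "h \<in> borel_measurable (F t)" unfolding h_def using mF by measurable
  have mM[measurable]: "m \<in> borel_measurable M" by (rule measurable_from_subalg[OF F_subalg mF])
  have hM[measurable]: "h \<in> borel_measurable M" by (rule measurable_from_subalg[OF F_subalg hF])
  have h_bnd: "\<bar>h \<omega>\<bar> \<le> 1 / (2 * a)" for \<omega>
    unfolding h_def m_def using apos by (simp add: field_simps)
  have int_hL: "integrable M (\<lambda>\<omega>. h \<omega> * L (Suc t) \<omega>)"
  proof (rule int_dom[of "\<lambda>\<omega>. 1 / (2 * a) * L (Suc t) \<omega>"])
    fix \<omega> show "\<bar>h \<omega> * L (Suc t) \<omega>\<bar> \<le> 1 / (2 * a) * L (Suc t) \<omega>"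
    proof -
      have "\<bar>h \<omega>\<bar> * \<bar>L (Suc t) \<omega>\<bar> \<le> 1 / (2 * a) * \<bar>L (Suc t) \<omega>\<bar>"
        by (rule mult_right_mono[OF h_bnd]) simp
      then show ?thesis unfolding abs_mult using L_nonneg[of "Suc t" \<omega>] by simp
    qed
  qed (intro int_intros int_L, measurable)
  have int_m: "integrable M (\<lambda>\<omega>. m \<omega> / 2)"
  proof (rule int_dom[of "\<lambda>\<omega>. N t \<omega> + a"])
    fix \<omega> show "\<bar>m \<omega> / 2\<bar> \<le> N t \<omega> + a" unfolding m_def using N_nonneg[of t \<omega>] apos by auto
  qed (intro int_intros int_N, measurable)
  have pw: "N (Suc t) \<omega> \<le> h \<omega> * L (Suc t) \<omega> + m \<omega> / 2" for \<omega>
  proof -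
    have "N (Suc t) \<omega> \<le> L (Suc t) \<omega> / (2 * m \<omega>) + m \<omega> / 2"
      unfolding lnorm_def by (rule sqrt_le_amgm[OF L_nonneg mpos])
    then show ?thesis unfolding h_def by simp
  qed
  have 1: "AE \<omega> in M. real_cond_exp M (F t) (\<lambda>\<omega>. N (Suc t) \<omega>) \<omega> \<le> real_cond_exp M (F t) (\<lambda>\<omega>. h \<omega> * L (Suc t) \<omega> + m \<omega> / 2) \<omega>"
    by (rule Ft.real_cond_exp_mono[OF _ int_N]) (auto intro: pw intro!: int_intros int_hL int_m)
  have 2: "AE \<omega> in M. real_cond_exp M (F t) (\<lambda>\<omega>. h \<omega> * L (Suc t) \<omega> + m \<omega> / 2) \<omega>
      = real_cond_exp M (F t) (\<lambda>\<omega>. h \<omega> * L (Suc t) \<omega>) \<omega> + real_cond_exp M (F t) (\<lambda>\<omega>. m \<omega> / 2) \<omega>"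
    by (rule Ft.real_cond_exp_add[OF int_hL int_m])
  have 3: "AE \<omega> in M. real_cond_exp M (F t) (\<lambda>\<omega>. h \<omega> * L (Suc t) \<omega>) \<omega> = h \<omega> * real_cond_exp M (F t) (\<lambda>\<omega>. L (Suc t) \<omega>) \<omega>"
    by (rule Ft.real_cond_exp_mult[OF hF _ int_hL]) measurable
  have 4: "AE \<omega> in M. real_cond_exp M (F t) (\<lambda>\<omega>. m \<omega> / 2) \<omega> = m \<omega> / 2"
    by (rule Ft.real_cond_exp_F_meas[OF int_m]) (use mF in measurable)
  show "AE \<omega> in M. 2 * B * kap / \<epsilon> \<le> N t \<omega> \<longrightarrow> real_cond_exp M (F t) (\<lambda>\<omega>. N (Suc t) \<omega>) \<omega> \<le> N t \<omega> - \<epsilon> / (4 * kap)"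
    using 1 2 3 4 drift_F[of t]
  proof eventually_elim
    case (elim \<omega>)
    show ?case
    proof
      assume ge: "2 * B * kap / \<epsilon> \<le> N t \<omega>"
      then have mN: "m \<omega> = N t \<omega>" unfolding m_def a_def by simp
      have "real_cond_exp M (F t) (\<lambda>\<omega>. N (Suc t) \<omega>) \<omega> \<le> h \<omega> * real_cond_exp M (F t) (\<lambda>\<omega>. L (Suc t) \<omega>) \<omega> + m \<omega> / 2"
        using elim(1-4) by simp
      also have "\<dots> = real_cond_exp M (F t) (\<lambda>\<omega>. L (Suc t) \<omega>) \<omega> / (2 * N t \<omega>) + N t \<omega> / 2"
        unfolding h_def mN by simp
      also have "\<dots> \<le> N t \<omega> - \<epsilon> / (4 * kap)"
        by (rule part_a_arith[OF B_pos eps_pos kap_pos ge N_sq[symmetric] elim(5) N_le_S])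
      finally show "real_cond_exp M (F t) (\<lambda>\<omega>. N (Suc t) \<omega>) \<omega> \<le> N t \<omega> - \<epsilon> / (4 * kap)" .
    qed
  qed
  qed
  show ?thesis using cpos a_pos main by blast
qed

end


lemma lin_le_sq: assumes "r > 0" shows "(x::real) \<le> x^2 / (2 * r) + r / 2"
proof -
  have "0 \<le> (x - r)^2" by simp
  then have "2 * x * r \<le> x^2 + r^2" unfolding power2_diff by simp
  then show ?thesis using assms by (simp add: field_simps power2_eq_square)
qed

context T7 begin

definition "GG = (\<integral>\<omega>. (L 0 \<omega>)^2 \<partial>M) + C3 + 1"

lemma GG_pos: "GG > 0" unfolding GG_def using L2_int_nonneg[of 0] C3_nonneg by linarith

lemma L_int_growth: "(\<integral>\<omega>. L (Suc t) \<omega> \<partial>M) \<le> GG * sqrt (real (Suc t))"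
proof -
  define r where "r = sqrt (real (Suc t))"
  have r1: "r \<ge> 1" unfolding r_def by simp
  have rsq: "r^2 = real (Suc t)" unfolding r_def by simp
  have "(\<integral>\<omega>. L (Suc t) \<omega> \<partial>M) \<le> (\<integral>\<omega>. (L (Suc t) \<omega>)^2 / (2 * r) + r / 2 \<partial>M)"
    by (rule integral_mono[OF int_L]) (use r1 in \<open>auto intro!: int_intros int_L2 lin_le_sq\<close>)
  also have "\<dots> = (\<integral>\<omega>. (L (Suc t) \<omega>)^2 \<partial>M) / (2 * r) + r / 2"
    using int_L2[of "Suc t"] by (simp add: prob_space)
  also have "\<dots> \<le> ((\<integral>\<omega>. (L 0 \<omega>)^2 \<partial>M) + C3 * r^2) / (2 * r) + r / 2"
    using L2_growth[of "Suc t"] r1 unfolding rsq by (intro add_right_mono divide_right_mono) auto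
  also have "\<dots> \<le> GG * r"
  proof -
    have A: "(\<integral>\<omega>. (L 0 \<omega>)^2 \<partial>M) \<le> (\<integral>\<omega>. (L 0 \<omega>)^2 \<partial>M) * r^2"
    proof -
      have "1 \<le> r^2" using r1 by (simp add: one_le_power)
      then have "(\<integral>\<omega>. (L 0 \<omega>)^2 \<partial>M) * 1 \<le> (\<integral>\<omega>. (L 0 \<omega>)^2 \<partial>M) * r^2"
        using L2_int_nonneg[of 0] by (intro mult_left_mono) auto
      then show ?thesis by simp
    qed
    have "((\<integral>\<omega>. (L 0 \<omega>)^2 \<partial>M) + C3 * r^2) / (2 * r) + r / 2 \<le> ((\<integral>\<omega>. (L 0 \<omega>)^2 \<partial>M) * r^2 + C3 * r^2) / (2 * r) + r / 2"
      using A r1 by (intro add_right_mono divide_right_mono) auto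
    also have "\<dots> = ((\<integral>\<omega>. (L 0 \<omega>)^2 \<partial>M) + C3) * r / 2 + r / 2"
      using r1 by (simp add: field_simps power2_eq_square)
    also have "\<dots> \<le> GG * r" unfolding GG_def using r1 L2_int_nonneg[of 0] C3_nonneg
      by (simp add: field_simps)
    finally show ?thesis .
  qed
  finally show ?thesis unfolding r_def .
qed

lemma term_bound: assumes k: "k \<in> {1..K}"
  shows "ennreal (1 / (real (Suc t))\<^sup>2) * (\<integral>\<^sup>+ \<omega>. ennreal ((Q (Suc t) k \<omega>)\<^sup>2) \<partial>M)
     \<le> ennreal (cw * GG * real (Suc t) powr (-3/2))"
proof -
  define s where "s = real (Suc t)"
  have spos: "s > 0" unfolding s_def by simp
  have "(\<integral>\<^sup>+ \<omega>. ennreal ((Q (Suc t) k \<omega>)\<^sup>2) \<partial>M) = ennreal (\<integral>\<omega>. (Q (Suc t) k \<omega>)\<^sup>2 \<partial>M)"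
    by (rule nn_integral_eq_integral) (auto intro: int_Qsq[OF k])
  also have "(\<integral>\<omega>. (Q (Suc t) k \<omega>)\<^sup>2 \<partial>M) \<le> (\<integral>\<omega>. cw * L (Suc t) \<omega> \<partial>M)"
    by (rule integral_mono[OF int_Qsq[OF k] _ Qsq_le[OF k]]) (intro int_intros int_L)
  also have "\<dots> = cw * (\<integral>\<omega>. L (Suc t) \<omega> \<partial>M)" by simp
  also have "\<dots> \<le> cw * (GG * sqrt s)" unfolding s_def by (rule mult_left_mono[OF L_int_growth cw_nonneg])
  finally have "ennreal (1 / s^2) * (\<integral>\<^sup>+ \<omega>. ennreal ((Q (Suc t) k \<omega>)\<^sup>2) \<partial>M) \<le> ennreal (1 / s^2) * ennreal (cw * (GG * sqrt s))"
    by (intro mult_left_mono) (auto intro: ennreal_leI)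
  also have "\<dots> = ennreal (cw * GG * (sqrt s / s^2))"
    using spos cw_nonneg GG_pos by (simp add: ennreal_mult[symmetric] field_simps)
  also have "sqrt s / s^2 = s powr (-3/2)"
  proof -
    have "s powr (-3/2) = s powr (1/2 - 2)" by simp
    also have "\<dots> = s powr (1/2) / s powr 2" by (rule powr_diff)
    also have "\<dots> = sqrt s / s^2" using spos by (simp add: powr_half_sqrt)
    finally show ?thesis by simp
  qed
  finally show ?thesis unfolding s_def .
qed

lemma summable_bound: "summable (\<lambda>t. cw * GG * real (Suc t) powr (-3/2))"
proof -
  have "summable (\<lambda>n. real n powr (-3/2))" by (subst summable_real_powr_iff) simp
  then have "summable (\<lambda>t. real (Suc t) powr (-3/2))"
    using summable_Suc_iff[where f = "\<lambda>n. real n powr (-3/2)"] by blast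
  then show ?thesis by (rule summable_mult)
qed

lemma part_c_k: assumes k: "k \<in> {1..K}"
  shows "(\<Sum>t. ennreal (1 / (real (Suc t))\<^sup>2) * (\<integral>\<^sup>+ \<omega>. ennreal ((Q (Suc t) k \<omega>)\<^sup>2) \<partial>M)) < \<infinity>"
proof -
  have "(\<Sum>t. ennreal (1 / (real (Suc t))\<^sup>2) * (\<integral>\<^sup>+ \<omega>. ennreal ((Q (Suc t) k \<omega>)\<^sup>2) \<partial>M))
      \<le> (\<Sum>t. ennreal (cw * GG * real (Suc t) powr (-3/2)))"
    by (rule suminf_le[OF term_bound[OF k] summableI summableI])
  also have "\<dots> < \<infinity>"
  proof -
    have "(\<Sum>t. ennreal (cw * GG * real (Suc t) powr (-3/2))) \<noteq> top"
      by (rule ennreal_suminf_neq_top[OF summable_bound]) (use cw_nonneg GG_pos in simp)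
    then show ?thesis by (simp add: less_top infinity_ennreal_def)
  qed
  finally show ?thesis .
qed

lemma part_d_k: assumes k: "k \<in> {1..K}"
  shows "AE \<omega> in M. (\<lambda>t. Q t k \<omega> / real t) \<longlonglongrightarrow> 0"
proof -
  have [measurable]: "Q t k \<in> borel_measurable M" for t using Q_meas k by auto
  have eq: "(\<integral>\<^sup>+ \<omega>. (\<Sum>t. ennreal ((Q (Suc t) k \<omega>)\<^sup>2 / (real (Suc t))\<^sup>2)) \<partial>M)
     = (\<Sum>t. ennreal (1 / (real (Suc t))\<^sup>2) * (\<integral>\<^sup>+ \<omega>. ennreal ((Q (Suc t) k \<omega>)\<^sup>2) \<partial>M))"
  proof -
    have "(\<integral>\<^sup>+ \<omega>. (\<Sum>t. ennreal ((Q (Suc t) k \<omega>)\<^sup>2 / (real (Suc t))\<^sup>2)) \<partial>M)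
       = (\<Sum>t. (\<integral>\<^sup>+ \<omega>. ennreal ((Q (Suc t) k \<omega>)\<^sup>2 / (real (Suc t))\<^sup>2) \<partial>M))"
      by (rule nn_integral_suminf) measurable
    also have "\<dots> = (\<Sum>t. ennreal (1 / (real (Suc t))\<^sup>2) * (\<integral>\<^sup>+ \<omega>. ennreal ((Q (Suc t) k \<omega>)\<^sup>2) \<partial>M))"
    proof (rule suminf_cong)
      fix t
      have "(\<integral>\<^sup>+ \<omega>. ennreal ((Q (Suc t) k \<omega>)\<^sup>2 / (real (Suc t))\<^sup>2) \<partial>M)
         = (\<integral>\<^sup>+ \<omega>. ennreal (1 / (real (Suc t))\<^sup>2) * ennreal ((Q (Suc t) k \<omega>)\<^sup>2) \<partial>M)"
        by (rule nn_integral_cong) (simp add: ennreal_mult[symmetric])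
      also have "\<dots> = ennreal (1 / (real (Suc t))\<^sup>2) * (\<integral>\<^sup>+ \<omega>. ennreal ((Q (Suc t) k \<omega>)\<^sup>2) \<partial>M)"
        by (rule nn_integral_cmult) measurable
      finally show "(\<integral>\<^sup>+ \<omega>. ennreal ((Q (Suc t) k \<omega>)\<^sup>2 / (real (Suc t))\<^sup>2) \<partial>M)
         = ennreal (1 / (real (Suc t))\<^sup>2) * (\<integral>\<^sup>+ \<omega>. ennreal ((Q (Suc t) k \<omega>)\<^sup>2) \<partial>M)" .
    qed
    finally show ?thesis .
  qed
  have "AE \<omega> in M. (\<Sum>t. ennreal ((Q (Suc t) k \<omega>)\<^sup>2 / (real (Suc t))\<^sup>2)) \<noteq> \<infinity>"
    by (rule nn_integral_PInf_AE) (use part_c_k[OF k] eq in \<open>auto simp: top.not_eq_extremum\<close>)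
  then show ?thesis
  proof eventually_elim
    case (elim \<omega>)
    have "summable (\<lambda>t. (Q (Suc t) k \<omega>)\<^sup>2 / (real (Suc t))\<^sup>2)"
      by (rule summable_suminf_not_top) (use elim in auto)
    then have "(\<lambda>t. (Q (Suc t) k \<omega>)\<^sup>2 / (real (Suc t))\<^sup>2) \<longlonglongrightarrow> 0" by (rule summable_LIMSEQ_zero)
    then have "(\<lambda>t. sqrt ((Q (Suc t) k \<omega>)\<^sup>2 / (real (Suc t))\<^sup>2)) \<longlonglongrightarrow> sqrt 0" by (rule tendsto_real_sqrt)
    then have "(\<lambda>t. \<bar>Q (Suc t) k \<omega> / real (Suc t)\<bar>) \<longlonglongrightarrow> 0"
      by (simp add: real_sqrt_divide)
    then have "(\<lambda>t. Q (Suc t) k \<omega> / real (Suc t)) \<longlonglongrightarrow> 0" by (rule iffD1[OF tendsto_rabs_zero_iff])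
    then show ?case by (rule LIMSEQ_imp_Suc)
  qed
qed

end


context T7 begin

definition "Y t \<omega> = real_cond_exp M (H t) (\<lambda>\<omega>. L (Suc t) \<omega> - L t \<omega>) \<omega>"
definition "X t \<omega> = (L (Suc t) \<omega> - L t \<omega>) - Y t \<omega>"
definition "Z n \<omega> = (\<Sum>\<tau><n. X \<tau> \<omega>)"

lemma Y_H: "Y t \<in> borel_measurable (H t)"
  unfolding Y_def[abs_def] by (rule borel_measurable_cond_exp)

lemma Y_H': "t < s \<Longrightarrow> Y t \<in> borel_measurable (H s)"
  by (rule measurable_from_subalg[OF H_mono Y_H]) simp

lemma Y_M[measurable]: "Y t \<in> borel_measurable M"
  unfolding Y_def[abs_def] by (rule borel_measurable_cond_exp2)

lemma X_M[measurable]: "X t \<in> borel_measurable M"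
  unfolding X_def[abs_def] by measurable

lemma Z_M[measurable]: "Z n \<in> borel_measurable M"
  unfolding Z_def[abs_def] by measurable

lemma X_H: "t < s \<Longrightarrow> X t \<in> borel_measurable (H s)"
  unfolding X_def[abs_def]
  by (intro borel_measurable_diff L_H Y_H') auto

lemma Z_H: "Z n \<in> borel_measurable (H n)"
  unfolding Z_def[abs_def] by (intro borel_measurable_sum X_H) auto

lemma Y2: "integrable M (\<lambda>\<omega>. (Y t \<omega>)^2) \<and> (\<integral>\<omega>. (Y t \<omega>)^2 \<partial>M) \<le> (\<integral>\<omega>. (L (Suc t) \<omega> - L t \<omega>)^2 \<partial>M)"
proof -
  interpret Ht: sigma_finite_subalgebra M "H t" by (rule H_sfs)
  have J: "AE \<omega> in M. (real_cond_exp M (H t) (\<lambda>\<omega>. L (Suc t) \<omega> - L t \<omega>) \<omega>)^2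
      \<le> real_cond_exp M (H t) (\<lambda>\<omega>. (L (Suc t) \<omega> - L t \<omega>)^2) \<omega>"
    by (rule Ht.real_cond_exp_jensens_inequality(2)[where I=UNIV, OF int_dL _ _ int_dL2 convex_power2]) auto
  have ic: "integrable M (real_cond_exp M (H t) (\<lambda>\<omega>. (L (Suc t) \<omega> - L t \<omega>)^2))"
    by (rule Ht.real_cond_exp_int(1)[OF int_dL2])
  have i: "integrable M (\<lambda>\<omega>. (Y t \<omega>)^2)"
    by (rule Bochner_Integration.integrable_bound[OF ic]) (use J in \<open>auto simp: Y_def\<close>)
  have "(\<integral>\<omega>. (Y t \<omega>)^2 \<partial>M) \<le> (\<integral>\<omega>. real_cond_exp M (H t) (\<lambda>\<omega>. (L (Suc t) \<omega> - L t \<omega>)^2) \<omega> \<partial>M)"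
    by (rule integral_mono_AE[OF i ic]) (use J in \<open>simp add: Y_def\<close>)
  also have "\<dots> = (\<integral>\<omega>. (L (Suc t) \<omega> - L t \<omega>)^2 \<partial>M)"
    by (rule Ht.real_cond_exp_int(2)[OF int_dL2])
  finally show ?thesis using i by simp
qed

lemma int_Y2: "integrable M (\<lambda>\<omega>. (Y t \<omega>)^2)" using Y2 by simp

lemma int_X2: "integrable M (\<lambda>\<omega>. (X t \<omega>)^2)"
proof (rule int_dom[of "\<lambda>\<omega>. 2 * (L (Suc t) \<omega> - L t \<omega>)^2 + 2 * (Y t \<omega>)^2"])
  fix \<omega> show "\<bar>(X t \<omega>)^2\<bar> \<le> 2 * (L (Suc t) \<omega> - L t \<omega>)^2 + 2 * (Y t \<omega>)^2"
    unfolding X_def using sq_sum_le[of "L (Suc t) \<omega> - L t \<omega>" "- Y t \<omega>"] by simp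
qed (intro int_intros int_dL2 int_Y2, measurable)

lemma X2_le: "(\<integral>\<omega>. (X t \<omega>)^2 \<partial>M) \<le> 4 * (\<integral>\<omega>. (L (Suc t) \<omega> - L t \<omega>)^2 \<partial>M)"
proof -
  have "(\<integral>\<omega>. (X t \<omega>)^2 \<partial>M) \<le> (\<integral>\<omega>. 2 * (L (Suc t) \<omega> - L t \<omega>)^2 + 2 * (Y t \<omega>)^2 \<partial>M)"
    by (rule integral_mono[OF int_X2]) (auto intro!: int_intros int_dL2 int_Y2 simp: X_def
         intro: sq_sum_le[of "L (Suc t) _ - L t _" "- Y t _", simplified])
  also have "\<dots> = 2 * (\<integral>\<omega>. (L (Suc t) \<omega> - L t \<omega>)^2 \<partial>M) + 2 * (\<integral>\<omega>. (Y t \<omega>)^2 \<partial>M)"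
    using int_dL2[of t] int_Y2[of t] by simp
  finally show ?thesis using Y2[of t] by linarith
qed

lemma int_Z2: "integrable M (\<lambda>\<omega>. (Z n \<omega>)^2)"
proof (induction n)
  case 0 then show ?case by (simp add: Z_def)
next
  case (Suc n)
  show ?case
  proof (rule int_dom[of "\<lambda>\<omega>. 2 * (Z n \<omega>)^2 + 2 * (X n \<omega>)^2"])
    fix \<omega> show "\<bar>(Z (Suc n) \<omega>)^2\<bar> \<le> 2 * (Z n \<omega>)^2 + 2 * (X n \<omega>)^2"
      unfolding Z_def using sq_sum_le[of "Z n \<omega>" "X n \<omega>"] by (simp add: Z_def)
  qed (intro int_intros Suc int_X2, measurable)
qed

lemma cross_zero: "(\<integral>\<omega>. Z n \<omega> * X n \<omega> \<partial>M) = 0"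
proof -
  interpret Hn: sigma_finite_subalgebra M "H n" by (rule H_sfs)
  have i1: "integrable M (\<lambda>\<omega>. Z n \<omega> * (L (Suc n) \<omega> - L n \<omega>))"
    by (rule int_dom[OF _ _ prod_le_sq]) (intro int_intros int_Z2 int_dL2, measurable)
  have i2: "integrable M (\<lambda>\<omega>. Z n \<omega> * Y n \<omega>)"
    by (rule int_dom[OF _ _ prod_le_sq]) (intro int_intros int_Z2 int_Y2, measurable)
  have e: "(\<integral>\<omega>. Z n \<omega> * Y n \<omega> \<partial>M) = (\<integral>\<omega>. Z n \<omega> * (L (Suc n) \<omega> - L n \<omega>) \<partial>M)"
    unfolding Y_def by (rule Hn.real_cond_exp_intg(2)[OF i1 Z_H]) measurable
  have "(\<integral>\<omega>. Z n \<omega> * X n \<omega> \<partial>M) = (\<integral>\<omega>. Z n \<omega> * (L (Suc n) \<omega> - L n \<omega>) - Z n \<omega> * Y n \<omega> \<partial>M)"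
    unfolding X_def by (simp add: right_diff_distrib)
  also have "\<dots> = 0" using i1 i2 e by simp
  finally show ?thesis .
qed

lemma Z2_step: "(\<integral>\<omega>. (Z (Suc n) \<omega>)^2 \<partial>M) \<le> (\<integral>\<omega>. (Z n \<omega>)^2 \<partial>M) + 4 * (\<integral>\<omega>. (L (Suc n) \<omega> - L n \<omega>)^2 \<partial>M)"
proof -
  have i1: "integrable M (\<lambda>\<omega>. Z n \<omega> * X n \<omega>)"
    by (rule int_dom[OF _ _ prod_le_sq]) (intro int_intros int_Z2 int_X2, measurable)
  have "(\<integral>\<omega>. (Z (Suc n) \<omega>)^2 \<partial>M) = (\<integral>\<omega>. (Z n \<omega>)^2 + 2 * (Z n \<omega> * X n \<omega>) + (X n \<omega>)^2 \<partial>M)"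
    by (rule Bochner_Integration.integral_cong) (auto simp: Z_def power2_eq_square algebra_simps)
  also have "\<dots> = (\<integral>\<omega>. (Z n \<omega>)^2 \<partial>M) + 2 * (\<integral>\<omega>. Z n \<omega> * X n \<omega> \<partial>M) + (\<integral>\<omega>. (X n \<omega>)^2 \<partial>M)"
    using int_Z2[of n] i1 int_X2[of n] by simp
  finally show ?thesis using cross_zero[of n] X2_le[of n] by linarith
qed

end


lemma exists_sqrt_bracket: "\<exists>n::nat. n^2 \<le> t \<and> t < (Suc n)^2"
proof (induction t)
  case 0 show ?case by (intro exI[of _ 0]) simp
next
  case (Suc t)
  then obtain n where n: "n^2 \<le> t" "t < (Suc n)^2" by blast
  show ?case
  proof (cases "Suc t < (Suc n)^2")
    case True then show ?thesis using n by (intro exI[of _ n]) auto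
  next
    case False
    then have e: "Suc t = (Suc n)^2" using n by linarith
    have "(Suc n)^2 < (Suc (Suc n))^2" by (rule power_strict_mono) auto
    then show ?thesis using e by (intro exI[of _ "Suc n"]) auto
  qed
qed

lemma avg_bound:
  fixes s :: "nat \<Rightarrow> real" and n t :: nat
  assumes n1: "n \<ge> 1" and nt: "n^2 \<le> t" and tn: "t < (Suc n)^2" and eps: "\<epsilon> > 0"
    and s: "\<And>\<tau>. s \<tau> \<ge> 0"
    and hyp: "\<epsilon> * (\<Sum>\<tau><(Suc n)^2. s \<tau>) \<le> B * real ((Suc n)^2) + L0 + Zm"
  shows "(1 / real t) * (\<Sum>\<tau><t. s \<tau>) \<le> (1 + 1 / real n)^2 * (B + L0 * (inverse (real (Suc n)))^2 + Zm / real ((Suc n)^2)) / \<epsilon>"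
proof -
  define P where "P = (\<Sum>\<tau><t. s \<tau>)"
  define P' where "P' = (\<Sum>\<tau><(Suc n)^2. s \<tau>)"
  have P0: "P \<ge> 0" unfolding P_def by (rule sum_nonneg) (use s in auto)
  have PP': "P \<le> P'" unfolding P_def P'_def
    by (rule sum_mono2) (use tn s in auto)
  have npos: "real n > 0" using n1 by simp
  have tpos: "real t \<ge> real n ^ 2" using nt by (metis of_nat_le_iff of_nat_power)
  have "(1 / real t) * P \<le> (1 / real n ^ 2) * P"
    by (rule mult_right_mono[OF _ P0]) (use npos tpos in \<open>simp add: frac_le\<close>)
  also have "\<dots> \<le> (1 / real n ^ 2) * P'" by (rule mult_left_mono[OF PP']) simp
  also have "\<dots> \<le> (1 / real n ^ 2) * ((B * real ((Suc n)^2) + L0 + Zm) / \<epsilon>)"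
    by (rule mult_left_mono) (use hyp eps in \<open>simp_all add: P'_def field_simps\<close>)
  also have "\<dots> = (1 + 1 / real n)^2 * (B + L0 * (inverse (real (Suc n)))^2 + Zm / real ((Suc n)^2)) / \<epsilon>"
  proof -
    define m where "m = real (Suc n)"
    have mpos: "m > 0" unfolding m_def by simp
    have e1: "real ((Suc n)^2) = m^2" unfolding m_def by simp
    have e2: "1 + 1 / real n = m / real n" unfolding m_def using npos by (simp add: field_simps)
    show ?thesis unfolding e1 e2 m_def[symmetric] using npos eps mpos
      by (simp add: field_simps power2_eq_square)
  qed
  finally show ?thesis unfolding P_def .
qed



context T7 begin

definition "C4 = 4 * (C1 + C2 + C1 * bb)"

lemma C4_nonneg: "C4 \<ge> 0" unfolding C4_def using C1_nonneg C2_nonneg bb_pos by simp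

lemma dL2_le_N3: "(\<integral>\<omega>. (L (Suc t) \<omega> - L t \<omega>)^2 \<partial>M) \<le> C1 + C2 + C1 * (\<integral>\<omega>. N t \<omega> ^ 3 \<partial>M)"
proof -
  have eq: "Wq * (2 * D1 * cw * x + D1 / 2) = C1 * x + C2" for x
    unfolding C1_def C2_def by (simp add: algebra_simps)
  have a: "(\<integral>\<omega>. (L (Suc t) \<omega> - L t \<omega>)^2 \<partial>M) \<le> C1 * (\<integral>\<omega>. L t \<omega> \<partial>M) + C2"
    using int_dL2_le[of t] unfolding eq .
  have "(\<integral>\<omega>. L t \<omega> \<partial>M) \<le> (\<integral>\<omega>. 1 * N t \<omega> ^ 3 + 1 / 1^2 \<partial>M)"
    by (rule integral_mono[OF int_L]) (auto intro!: int_intros int_N3 simp: N_sq[symmetric]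
        intro: sq_le_cube[OF N_nonneg, of 1, simplified])
  also have "\<dots> = (\<integral>\<omega>. N t \<omega> ^ 3 \<partial>M) + 1" using int_N3[of t] by (simp add: prob_space)
  finally have b: "(\<integral>\<omega>. L t \<omega> \<partial>M) \<le> (\<integral>\<omega>. N t \<omega> ^ 3 \<partial>M) + 1" .
  have "C1 * (\<integral>\<omega>. L t \<omega> \<partial>M) \<le> C1 * ((\<integral>\<omega>. N t \<omega> ^ 3 \<partial>M) + 1)"
    by (rule mult_left_mono[OF b C1_nonneg])
  then show ?thesis using a by (simp add: algebra_simps)
qed

lemma Z2_sum: "(\<integral>\<omega>. (Z n \<omega>)^2 \<partial>M) \<le> 4 * (\<Sum>\<tau><n. C1 + C2 + C1 * (\<integral>\<omega>. N \<tau> \<omega> ^ 3 \<partial>M))"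
proof (induction n)
  case 0 then show ?case by (simp add: Z_def)
next
  case (Suc n)
  show ?case using Z2_step[of n] dL2_le_N3[of n] Suc.IH by simp
qed

lemma Z2_bound: "(\<integral>\<omega>. (Z n \<omega>)^2 \<partial>M) \<le> C4 * real n"
proof (cases "n = 0")
  case True then show ?thesis by (simp add: Z_def)
next
  case False
  then have n1: "n \<ge> 1" by simp
  have "(\<Sum>\<tau><n. C1 + C2 + C1 * (\<integral>\<omega>. N \<tau> \<omega> ^ 3 \<partial>M)) = (C1 + C2) * real n + C1 * (\<Sum>\<tau><n. (\<integral>\<omega>. N \<tau> \<omega> ^ 3 \<partial>M))"
    by (simp add: sum.distrib sum_distrib_left)
  also have "\<dots> \<le> (C1 + C2) * real n + C1 * (bb * real n)"
    by (rule add_left_mono, rule mult_left_mono[OF sum_N3[OF n1] C1_nonneg])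
  finally show ?thesis using Z2_sum[of n] unfolding C4_def by (simp add: algebra_simps)
qed

lemma u_conv: "AE \<omega> in M. (\<lambda>n. Z ((Suc n)^2) \<omega> / real ((Suc n)^2)) \<longlonglongrightarrow> 0"
proof -
  define m where "m n = (Suc n)^2" for n
  have mpos: "real (m n) > 0" for n unfolding m_def by simp
  have eq: "(\<integral>\<^sup>+ \<omega>. (\<Sum>n. ennreal ((Z (m n) \<omega>)^2 / (real (m n))^2)) \<partial>M)
     = (\<Sum>n. ennreal ((\<integral>\<omega>. (Z (m n) \<omega>)^2 \<partial>M) / (real (m n))^2))"
  proof -
    have "(\<integral>\<^sup>+ \<omega>. (\<Sum>n. ennreal ((Z (m n) \<omega>)^2 / (real (m n))^2)) \<partial>M)
       = (\<Sum>n. (\<integral>\<^sup>+ \<omega>. ennreal ((Z (m n) \<omega>)^2 / (real (m n))^2) \<partial>M))"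
      by (rule nn_integral_suminf) measurable
    also have "\<dots> = (\<Sum>n. ennreal ((\<integral>\<omega>. (Z (m n) \<omega>)^2 \<partial>M) / (real (m n))^2))"
    proof (rule suminf_cong)
      fix n
      have "(\<integral>\<^sup>+ \<omega>. ennreal ((Z (m n) \<omega>)^2 / (real (m n))^2) \<partial>M) = ennreal (\<integral>\<omega>. (Z (m n) \<omega>)^2 / (real (m n))^2 \<partial>M)"
        by (rule nn_integral_eq_integral) (auto intro!: int_intros int_Z2 integrable_divide_zero)
      also have "(\<integral>\<omega>. (Z (m n) \<omega>)^2 / (real (m n))^2 \<partial>M) = (\<integral>\<omega>. (Z (m n) \<omega>)^2 \<partial>M) / (real (m n))^2"
        by simp
      finally show "(\<integral>\<^sup>+ \<omega>. ennreal ((Z (m n) \<omega>)^2 / (real (m n))^2) \<partial>M) = ennreal ((\<integral>\<omega>. (Z (m n) \<omega>)^2 \<partial>M) / (real (m n))^2)" .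
    qed
    finally show ?thesis .
  qed
  have bnd: "ennreal ((\<integral>\<omega>. (Z (m n) \<omega>)^2 \<partial>M) / (real (m n))^2) \<le> ennreal (C4 * inverse (real (Suc n) ^ 2))" for n
  proof (rule ennreal_leI)
    have "(\<integral>\<omega>. (Z (m n) \<omega>)^2 \<partial>M) / (real (m n))^2 \<le> C4 * real (m n) / (real (m n))^2"
      by (rule divide_right_mono[OF Z2_bound]) simp
    also have "\<dots> = C4 * inverse (real (Suc n) ^ 2)"
    proof -
      define q where "q = real (Suc n)"
      have qpos: "q > 0" unfolding q_def by simp
      have "real (m n) = q^2" unfolding m_def q_def by simp
      then show ?thesis unfolding q_def[symmetric] using qpos by (simp add: power2_eq_square field_simps)
    qed
    finally show "(\<integral>\<omega>. (Z (m n) \<omega>)^2 \<partial>M) / (real (m n))^2 \<le> C4 * inverse (real (Suc n) ^ 2)" .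
  qed
  have sm: "summable (\<lambda>n. C4 * inverse (real (Suc n) ^ 2))"
  proof -
    have "summable (\<lambda>n. inverse (real n ^ 2))" by (rule inverse_power_summable) simp
    then have "summable (\<lambda>n. inverse (real (Suc n) ^ 2))"
      using summable_Suc_iff[where f = "\<lambda>n. inverse (real n ^ 2)"] by blast
    then show ?thesis by (rule summable_mult)
  qed
  have fin: "(\<Sum>n. ennreal ((\<integral>\<omega>. (Z (m n) \<omega>)^2 \<partial>M) / (real (m n))^2)) \<noteq> \<infinity>"
  proof -
    have "(\<Sum>n. ennreal ((\<integral>\<omega>. (Z (m n) \<omega>)^2 \<partial>M) / (real (m n))^2)) \<le> (\<Sum>n. ennreal (C4 * inverse (real (Suc n) ^ 2)))"
      by (rule suminf_le[OF bnd summableI summableI])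
    moreover have "(\<Sum>n. ennreal (C4 * inverse (real (Suc n) ^ 2))) \<noteq> top"
      by (rule ennreal_suminf_neq_top[OF sm]) (use C4_nonneg in simp)
    ultimately show ?thesis by (auto simp: infinity_ennreal_def top_unique)
  qed
  have "AE \<omega> in M. (\<Sum>n. ennreal ((Z (m n) \<omega>)^2 / (real (m n))^2)) \<noteq> \<infinity>"
    by (rule nn_integral_PInf_AE) (use fin eq in auto)
  then show ?thesis
  proof eventually_elim
    case (elim \<omega>)
    have "summable (\<lambda>n. (Z (m n) \<omega>)^2 / (real (m n))^2)"
      by (rule summable_suminf_not_top) (use elim in \<open>auto simp: infinity_ennreal_def\<close>)
    then have "(\<lambda>n. (Z (m n) \<omega>)^2 / (real (m n))^2) \<longlonglongrightarrow> 0" by (rule summable_LIMSEQ_zero)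
    then have "(\<lambda>n. sqrt ((Z (m n) \<omega>)^2 / (real (m n))^2)) \<longlonglongrightarrow> sqrt 0" by (rule tendsto_real_sqrt)
    then have "(\<lambda>n. \<bar>Z (m n) \<omega> / real (m n)\<bar>) \<longlonglongrightarrow> 0"
      using mpos by (simp add: real_sqrt_divide)
    then show "(\<lambda>n. Z ((Suc n)^2) \<omega> / real ((Suc n)^2)) \<longlonglongrightarrow> 0"
      unfolding m_def by (rule iffD1[OF tendsto_rabs_zero_iff])
  qed
qed

lemma pathwise: "AE \<omega> in M. \<forall>n. \<epsilon> * (\<Sum>\<tau><n. S \<tau> \<omega>) \<le> B * real n + L 0 \<omega> + Z n \<omega>"
proof -
  have "AE \<omega> in M. \<forall>\<tau>. Y \<tau> \<omega> \<le> B - \<epsilon> * S \<tau> \<omega>"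
    unfolding AE_all_countable Y_def using drift by blast
  then show ?thesis
  proof eventually_elim
    case (elim \<omega>)
    have "\<epsilon> * (\<Sum>\<tau><n. S \<tau> \<omega>) \<le> B * real n - L n \<omega> + L 0 \<omega> + Z n \<omega>" for n
    proof (induction n)
      case 0 then show ?case by (simp add: Z_def)
    next
      case (Suc n)
      have "\<epsilon> * S n \<omega> \<le> B - Y n \<omega>" using elim[rule_format, of n] by linarith
      then show ?case using Suc.IH by (simp add: Z_def X_def algebra_simps)
    qed
    note ih = this
    show ?case
    proof
      fix n show "\<epsilon> * (\<Sum>\<tau><n. S \<tau> \<omega>) \<le> B * real n + L 0 \<omega> + Z n \<omega>"
        using ih[of n] L_nonneg[of n \<omega>] by linarith
    qed
  qed
qed

end


context T7 begin

lemma part_e: "AE \<omega> in M. limsup (\<lambda>t. ereal ((1 / real t) * (\<Sum>\<tau><t. \<Sum>k=1..K. \<bar>Q \<tau> k \<omega>\<bar>)))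
          \<le> ereal (B / \<epsilon>)"
  using pathwise u_conv
proof eventually_elim
  case (elim \<omega>)
  define u where "u n = Z ((Suc n)^2) \<omega> / real ((Suc n)^2)" for n
  define R where "R n = (1 + 1 / real n)^2 * (B + L 0 \<omega> * (inverse (real (Suc n)))^2 + u n) / \<epsilon>" for n
  have u0: "u \<longlonglongrightarrow> 0" unfolding u_def[abs_def] by (rule elim(2))
  have "R \<longlonglongrightarrow> (1 + 0)^2 * (B + L 0 \<omega> * 0^2 + 0) / \<epsilon>"
    unfolding R_def[abs_def] using eps_pos by (intro tendsto_intros lim_1_over_n LIMSEQ_inverse_real_of_nat u0) auto
  then have R_lim: "R \<longlonglongrightarrow> B / \<epsilon>" by simp
  show ?case
  proof (rule ereal_le_epsilon2)
    fix \<delta> :: real assume dpos: "0 < \<delta>"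
    have "eventually (\<lambda>n. R n < B / \<epsilon> + \<delta>) sequentially"
      by (rule order_tendstoD(2)[OF R_lim]) (use dpos in simp)
    then obtain N0 where N0: "\<And>n. n \<ge> N0 \<Longrightarrow> R n < B / \<epsilon> + \<delta>" by (auto simp: eventually_sequentially)
    have "eventually (\<lambda>t. ereal ((1 / real t) * (\<Sum>\<tau><t. S \<tau> \<omega>)) \<le> ereal (B / \<epsilon> + \<delta>)) sequentially"
      unfolding eventually_sequentially
    proof (intro exI[of _ "(Suc N0)^2"] allI impI)
      fix t assume tge: "(Suc N0)^2 \<le> t"
      obtain n where n: "n^2 \<le> t" "t < (Suc n)^2" using exists_sqrt_bracket by blast
      have "(Suc N0)^2 < (Suc n)^2" using tge n(2) by linarith
      then have "Suc N0 < Suc n" by (rule power_less_imp_less_base) simp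
      then have nN0: "n \<ge> N0" and n1: "n \<ge> 1" by auto
      have "(1 / real t) * (\<Sum>\<tau><t. S \<tau> \<omega>) \<le> R n"
        unfolding R_def u_def
        by (rule avg_bound[OF n1 n(1) n(2) eps_pos S_nonneg elim(1)[rule_format]])
      also have "\<dots> \<le> B / \<epsilon> + \<delta>" using N0[OF nN0] by simp
      finally show "ereal ((1 / real t) * (\<Sum>\<tau><t. S \<tau> \<omega>)) \<le> ereal (B / \<epsilon> + \<delta>)" by simp
    qed
    then have "limsup (\<lambda>t. ereal ((1 / real t) * (\<Sum>\<tau><t. S \<tau> \<omega>))) \<le> ereal (B / \<epsilon> + \<delta>)"
      by (rule Limsup_bounded)
    then show "limsup (\<lambda>t. ereal ((1 / real t) * (\<Sum>\<tau><t. S \<tau> \<omega>))) \<le> ereal (B / \<epsilon>) + ereal \<delta>" by simp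
  qed
qed

end

theorem theorem7:
  fixes M :: "'a measure"
    and K :: nat
    and Q :: "nat \<Rightarrow> nat \<Rightarrow> 'a \<Rightarrow> real"
    and p :: "nat \<Rightarrow> 'a \<Rightarrow> real"
    and w :: "nat \<Rightarrow> real"
    and D \<epsilon> B :: real
  assumes "prob_space M"
    and Q_meas: "\<And>t k. k \<in> {1..K} \<Longrightarrow> Q t k \<in> borel_measurable M"
    and p_meas: "\<And>t. p t \<in> borel_measurable M"
    and w_pos: "\<And>k. k \<in> {1..K} \<Longrightarrow> w k > 0"
    and fourth_moment: "\<And>t k. k \<in> {1..K} \<Longrightarrow>
          AE \<omega> in M. nn_cond_exp M (state_alg M K Q t)
              (\<lambda>\<omega>. ennreal ((Q (Suc t) k \<omega> - Q t k \<omega>) ^ 4)) \<omega> \<le> ennreal D"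
    and init: "(\<integral>\<^sup>+ \<omega>. ennreal (lnorm w K (\<lambda>k. Q 0 k \<omega>) ^ 4) \<partial>M) < \<infinity>"
    and eps_pos: "\<epsilon> > 0" and B_pos: "B > 0"
    and drift: "\<And>t. AE \<omega> in M.
          real_cond_exp M (hist_alg M K Q p t)
              (\<lambda>\<omega>. lyap w K (\<lambda>k. Q (Suc t) k \<omega>) - lyap w K (\<lambda>k. Q t k \<omega>)) \<omega>
            \<le> B - \<epsilon> * (\<Sum>k=1..K. \<bar>Q t k \<omega>\<bar>)"
  shows
    "(\<exists>c > 0. \<exists>a > 0. \<forall>t. AE \<omega> in M.
        lnorm w K (\<lambda>k. Q t k \<omega>) \<ge> a \<longrightarrow>
        real_cond_exp M (state_alg M K Q t) (\<lambda>\<omega>. lnorm w K (\<lambda>k. Q (Suc t) k \<omega>)) \<omega>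
          \<le> lnorm w K (\<lambda>k. Q t k \<omega>) - c)
   \<and> (\<exists>b > 0. \<forall>m::nat. m \<ge> 1 \<longrightarrow>
        (\<Sum>t<m. \<integral>\<^sup>+ \<omega>. ennreal (lnorm w K (\<lambda>k. Q t k \<omega>) ^ 3) \<partial>M) \<le> ennreal (b * real m))
   \<and> (\<forall>k \<in> {1..K}.
        (\<Sum>t. ennreal (1 / (real (Suc t))\<^sup>2) * (\<integral>\<^sup>+ \<omega>. ennreal ((Q (Suc t) k \<omega>)\<^sup>2) \<partial>M)) < \<infinity>)
   \<and> (\<forall>k \<in> {1..K}. AE \<omega> in M. (\<lambda>t. Q t k \<omega> / real t) \<longlonglongrightarrow> 0)
   \<and> (AE \<omega> in M. limsup (\<lambda>t. ereal ((1 / real t) * (\<Sum>\<tau><t. \<Sum>k=1..K. \<bar>Q \<tau> k \<omega>\<bar>)))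
          \<le> ereal (B / \<epsilon>))"
proof -
  interpret T7 M K Q p w D \<epsilon> B
    by (intro T7.intro T7_axioms.intro) (use assms in auto)
  show ?thesis using part_a part_b part_c_k part_d_k part_e by blast
qed



end
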